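(* Let $k$ be a field, $\mathbf C$ a finite category, $\mathcal{A}$ a presheaf of $k$-algebras on $\mathbf C$ and $\mathcal{M}$ a presheaf of $\mathcal{A}$-bimodules. Then for every $q\in\mathbb N$ the cochain complex $(C^{*,q}(\mathcal{A},\mathcal{M}),d_{\mathrm{simp}})$ (Hochschild degree $q$ fixed, simplicial degree varying) is isomorphic to the Baues–Wirsching cochain complex $(C^*_{BW}(\mathbf C,\mathcal{C}^q_{\mathrm{HH}}(\mathcal{A},\mathcal{M})),\delta_{BW})$.
   Context: Presheaf of $k$-algebras: functor $\mathcal{A}\colon\mathbf C^{\mathrm{op}}\to\mathbf{Alg}_k$ (associative unital finite-dimensional). Presheaf of $\mathcal{A}$-bimodules: functor $\mathcal{M}$ on $\mathbf C^{\mathrm{op}}$ with each $\mathcal{M}(c)$ an $\mathcal{A}(c)$-bimodule and each $\mathcal{M}(d)\to\mathcal{M}(c)$ (for $c\to d$) an $\mathcal{A}(d)$-bimodule map. $C^q_{\mathrm{HH}}(B,N)=\mathrm{Hom}_k(B^{\otimes q},N)$. Gerstenhaber–Schack cochains: for strings $\sigma=(c_0\to\cdots\to c_p)$ of composable morphisms, $C^{p,q}(\mathcal{A},\mathcal{M})=\prod_\sigma C^q_{\mathrm{HH}}(\mathcal{A}(c_p),\mathcal{M}(c_0))$ and $(d_{\mathrm{simp}}\Gamma)^\sigma=T\circ\Gamma^{\partial_0\sigma}+\sum_{r=1}^{p-1}(-1)^r\Gamma^{\partial_r\sigma}+(-1)^p\Gamma^{\partial_p\sigma}\circ\phi^{\otimes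 q}$, where $\partial_r\sigma$ deletes $c_r$, $T\colon\mathcal{M}(c_1)\to\mathcal{M}(c_0)$ is induced by $c_0\to c_1$ and $\phi\colon\mathcal{A}(c_p)\to\mathcal{A}(c_{p-1})$ by $c_{p-1}\to c_p$. Twisted arrow category $\mathrm{Tw}\,\mathbf C$: objects morphisms $f\colon c\to d$; morphisms $f\to g$ ($g\colon c'\to d'$) are pairs $(\alpha\colon d\to d',\beta\colon c'\to c)$ with $g=\alpha f\beta$. A natural system is a functor $F\colon\mathrm{Tw}\,\mathbf C\to\mathbf{Ab}$; write $\alpha_*=F(\alpha,1)$, $\beta^*=F(1,\beta)$. Baues–Wirsching complex: $C^n_{BW}(\mathbf C,F)=\prod F(f_1\circ\cdots\circ f_n)$ over strings $c_n\xrightarrow{f_n}c_{n-1}\to\cdots\xrightarrow{f_1}c_0$, with $(\delta_{BW}\Gamma)(f_1,\dots,f_n)={f_1}_*\Gamma(f_2,\dots,f_n)+\sum_{i=1}^{n-1}(-1)^i\Gamma(f_1,\dots,f_if_{i+1},\dots,f_n)+(-1)^n f_n^*\Gamma(f_1,\dots,f_{n-1})$. The natural system $\mathcal{C}^q_{\mathrm{HH}}(\mathcal{A},\mathcal{M})$ sends $f\colon c\to d$ to $C^q_{\mathrm{HH}}(\mathcal{A}(d),\mathcal{M}(c))$ and $(\alpha,\beta)$ to $\Gamma\mapsto\mathcal{M}(\beta)\circ\Gamma\circ\mathcal{A}(\alpha)^{\otimes q}$. *)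

theory Defs
  imports "HOL-Algebra.Algebra"
begin

record ('o, 'm) cat =
  Ob  :: "'o set"
  Ar  :: "'m set"
  Dom :: "'m \<Rightarrow> 'o"
  Cod :: "'m \<Rightarrow> 'o"
  Idm :: "'o \<Rightarrow> 'm"
  Cmp :: "'m \<Rightarrow> 'm \<Rightarrow> 'm"   (* Cmp C g f = g \<circ> f, defined when Cod f = Dom g *)

definition category :: "('o, 'm) cat \<Rightarrow> bool" where
  "category C \<longleftrightarrow>
     (\<forall>f\<in>Ar C. Dom C f \<in> Ob C \<and> Cod C f \<in> Ob C) \<and>
     (\<forall>c\<in>Ob C. Idm C c \<in> Ar C \<and> Dom C (Idm C c) = c \<and> Cod C (Idm C c) = c) \<and>
     (\<forall>f\<in>Ar C. \<forall>g\<in>Ar C. Cod C f = Dom C g \<longrightarrow>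
        Cmp C g f \<in> Ar C \<and> Dom C (Cmp C g f) = Dom C f \<and> Cod C (Cmp C g f) = Cod C g) \<and>
     (\<forall>f\<in>Ar C. Cmp C f (Idm C (Dom C f)) = f \<and> Cmp C (Idm C (Cod C f)) f = f) \<and>
     (\<forall>f\<in>Ar C. \<forall>g\<in>Ar C. \<forall>h\<in>Ar C. Cod C f = Dom C g \<longrightarrow> Cod C g = Dom C h \<longrightarrow>
        Cmp C h (Cmp C g f) = Cmp C (Cmp C h g) f)"

definition finite_category :: "('o, 'm) cat \<Rightarrow> bool" where
  "finite_category C \<longleftrightarrow> category C \<and> finite (Ob C) \<and> finite (Ar C)"

definition fin_dim :: "'k ring \<Rightarrow> ('k, 'a) module \<Rightarrow> bool" where
  "fin_dim K V \<longleftrightarrow> (\<exists>S. finite S \<and> S \<subseteq> carrier V \<and>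
     (\<forall>x\<in>carrier V. \<exists>c \<in> S \<rightarrow> carrier K. x = finsum V (\<lambda>s. module.smult V (c s) s) S))"

definition k_linear :: "'k ring \<Rightarrow> ('k, 'a) module \<Rightarrow> ('k, 'b) module \<Rightarrow> ('a \<Rightarrow> 'b) \<Rightarrow> bool" where
  "k_linear K V W h \<longleftrightarrow> h \<in> carrier V \<rightarrow> carrier W \<and>
     (\<forall>x\<in>carrier V. \<forall>y\<in>carrier V. h (ring.add V x y) = ring.add W (h x) (h y)) \<and>
     (\<forall>a\<in>carrier K. \<forall>x\<in>carrier V. h (module.smult V a x) = module.smult W a (h x))"

definition k_algebra :: "'k ring \<Rightarrow> ('k, 'a) module \<Rightarrow> bool" where
  "k_algebra K A \<longleftrightarrow> ring A \<and> module K A \<and> fin_dim K A \<and>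
     (\<forall>a\<in>carrier K. \<forall>x\<in>carrier A. \<forall>y\<in>carrier A.
        monoid.mult A (module.smult A a x) y = module.smult A a (monoid.mult A x y) \<and>
        monoid.mult A x (module.smult A a y) = module.smult A a (monoid.mult A x y))"

definition k_alg_hom :: "'k ring \<Rightarrow> ('k, 'a) module \<Rightarrow> ('k, 'a) module \<Rightarrow> ('a \<Rightarrow> 'a) \<Rightarrow> bool" where
  "k_alg_hom K A B h \<longleftrightarrow> k_linear K A B h \<and> h \<in> ring_hom A B"

definition bimodule :: "'k ring \<Rightarrow> ('k, 'a) module \<Rightarrow> ('k, 'b) module \<Rightarrow>
    ('a \<Rightarrow> 'b \<Rightarrow> 'b) \<Rightarrow> ('b \<Rightarrow> 'a \<Rightarrow> 'b) \<Rightarrow> bool" where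
  "bimodule K A N l r \<longleftrightarrow> module K N \<and>
     (\<forall>x\<in>carrier A. \<forall>m\<in>carrier N. l x m \<in> carrier N \<and> r m x \<in> carrier N) \<and>
     (\<forall>x\<in>carrier A. \<forall>y\<in>carrier A. \<forall>m\<in>carrier N.
        l (ring.add A x y) m = ring.add N (l x m) (l y m) \<and>
        l (monoid.mult A x y) m = l x (l y m) \<and>
        r m (ring.add A x y) = ring.add N (r m x) (r m y) \<and>
        r m (monoid.mult A x y) = r (r m x) y \<and>
        r (l x m) y = l x (r m y)) \<and>
     (\<forall>x\<in>carrier A. \<forall>m\<in>carrier N. \<forall>n\<in>carrier N.
        l x (ring.add N m n) = ring.add N (l x m) (l x n) \<and>
        r (ring.add N m n) x = ring.add N (r m x) (r n x)) \<and>
     (\<forall>m\<in>carrier N. l (monoid.one A) m = m \<and> r m (monoid.one A) = m) \<and>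
     (\<forall>a\<in>carrier K. \<forall>x\<in>carrier A. \<forall>m\<in>carrier N.
        l (module.smult A a x) m = module.smult N a (l x m) \<and>
        l x (module.smult N a m) = module.smult N a (l x m) \<and>
        r m (module.smult A a x) = module.smult N a (r m x) \<and>
        r (module.smult N a m) x = module.smult N a (r m x))"

definition presheaf_alg :: "'k ring \<Rightarrow> ('o, 'm) cat \<Rightarrow> ('o \<Rightarrow> ('k, 'a) module) \<Rightarrow>
    ('m \<Rightarrow> 'a \<Rightarrow> 'a) \<Rightarrow> bool" where
  "presheaf_alg K C A Af \<longleftrightarrow>
     (\<forall>c\<in>Ob C. k_algebra K (A c)) \<and>
     (\<forall>f\<in>Ar C. k_alg_hom K (A (Cod C f)) (A (Dom C f)) (Af f)) \<and>
     (\<forall>c\<in>Ob C. \<forall>x\<in>carrier (A c). Af (Idm C c) x = x) \<and>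
     (\<forall>f\<in>Ar C. \<forall>g\<in>Ar C. Cod C f = Dom C g \<longrightarrow>
        (\<forall>x\<in>carrier (A (Cod C g)). Af (Cmp C g f) x = Af f (Af g x)))"

definition presheaf_bimod :: "'k ring \<Rightarrow> ('o, 'm) cat \<Rightarrow> ('o \<Rightarrow> ('k, 'a) module) \<Rightarrow>
    ('m \<Rightarrow> 'a \<Rightarrow> 'a) \<Rightarrow> ('o \<Rightarrow> ('k, 'b) module) \<Rightarrow> ('o \<Rightarrow> 'a \<Rightarrow> 'b \<Rightarrow> 'b) \<Rightarrow>
    ('o \<Rightarrow> 'b \<Rightarrow> 'a \<Rightarrow> 'b) \<Rightarrow> ('m \<Rightarrow> 'b \<Rightarrow> 'b) \<Rightarrow> bool" where
  "presheaf_bimod K C A Af M Ml Mr Mf \<longleftrightarrow>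
     (\<forall>c\<in>Ob C. bimodule K (A c) (M c) (Ml c) (Mr c)) \<and>
     (\<forall>f\<in>Ar C. k_linear K (M (Cod C f)) (M (Dom C f)) (Mf f) \<and>
        (\<forall>x\<in>carrier (A (Cod C f)). \<forall>m\<in>carrier (M (Cod C f)).
           Mf f (Ml (Cod C f) x m) = Ml (Dom C f) (Af f x) (Mf f m) \<and>
           Mf f (Mr (Cod C f) m x) = Mr (Dom C f) (Mf f m) (Af f x))) \<and>
     (\<forall>c\<in>Ob C. \<forall>m\<in>carrier (M c). Mf (Idm C c) m = m) \<and>
     (\<forall>f\<in>Ar C. \<forall>g\<in>Ar C. Cod C f = Dom C g \<longrightarrow>
        (\<forall>m\<in>carrier (M (Cod C g)). Mf (Cmp C g f) m = Mf f (Mf g m)))"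

text \<open>C^q_HH(B,N) = Hom_k(B^{\<otimes>q}, N), represented (via the universal property of the
  tensor power) as K-multilinear maps on q-tuples (lists of length q), extensional.\<close>
definition valid_args :: "('k, 'a) module \<Rightarrow> nat \<Rightarrow> 'a list \<Rightarrow> bool" where
  "valid_args B q xs \<longleftrightarrow> length xs = q \<and> set xs \<subseteq> carrier B"

definition HH :: "'k ring \<Rightarrow> ('k, 'a) module \<Rightarrow> ('k, 'b) module \<Rightarrow> nat \<Rightarrow> ('a list \<Rightarrow> 'b) set" where
  "HH K B N q = {\<Gamma>.
     (\<forall>xs. valid_args B q xs \<longrightarrow> \<Gamma> xs \<in> carrier N) \<and>
     (\<forall>xs. \<not> valid_args B q xs \<longrightarrow> \<Gamma> xs = undefined) \<and>
     (\<forall>xs i y. valid_args B q xs \<longrightarrow> i < q \<longrightarrow> y \<in> carrier B \<longrightarrow>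
        \<Gamma> (xs[i := ring.add B (xs ! i) y]) = ring.add N (\<Gamma> xs) (\<Gamma> (xs[i := y]))) \<and>
     (\<forall>xs i a. valid_args B q xs \<longrightarrow> i < q \<longrightarrow> a \<in> carrier K \<longrightarrow>
        \<Gamma> (xs[i := module.smult B a (xs ! i)]) = module.smult N a (\<Gamma> xs))}"

text \<open>The abelian group structure (written multiplicatively, HOL-Algebra monoid record).\<close>
definition HH_grp :: "'k ring \<Rightarrow> ('k, 'a) module \<Rightarrow> ('k, 'b) module \<Rightarrow> nat \<Rightarrow> ('a list \<Rightarrow> 'b) monoid" where
  "HH_grp K B N q = \<lparr>carrier = HH K B N q,
     monoid.mult = (\<lambda>\<Gamma> \<Gamma>'. \<lambda>xs. if valid_args B q xs then ring.add N (\<Gamma> xs) (\<Gamma>' xs) else undefined),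
     monoid.one = (\<lambda>xs. if valid_args B q xs then ring.zero N else undefined)\<rparr>"

section \<open>Natural systems and the Baues--Wirsching complex\<close>

text \<open>A natural system on C with values in abelian groups: NF f is the group F(f);
  lower \<alpha> f = \<alpha>_* : F(f) \<rightarrow> F(\<alpha> f),  upper \<beta> f = \<beta>^* : F(f) \<rightarrow> F(f \<beta>).\<close>
record ('m, 'x) natsys =
  NF    :: "'m \<Rightarrow> 'x monoid"
  lower :: "'m \<Rightarrow> 'm \<Rightarrow> 'x \<Rightarrow> 'x"
  upper :: "'m \<Rightarrow> 'm \<Rightarrow> 'x \<Rightarrow> 'x"

text \<open>Strings c_n --f_n--> ... --f_1--> c_0, represented as (c_0, [f_1, ..., f_n]).\<close>
definition bw_strings :: "('o, 'm) cat \<Rightarrow> nat \<Rightarrow> ('o \<times> 'm list) set" where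
  "bw_strings C n = {(c, fs). c \<in> Ob C \<and> length fs = n \<and> set fs \<subseteq> Ar C \<and>
     (fs \<noteq> [] \<longrightarrow> Cod C (hd fs) = c) \<and>
     (\<forall>i. Suc i < n \<longrightarrow> Dom C (fs ! i) = Cod C (fs ! Suc i))}"

fun cmp_list :: "('o, 'm) cat \<Rightarrow> 'o \<Rightarrow> 'm list \<Rightarrow> 'm" where
  "cmp_list C c [] = Idm C c"
| "cmp_list C c [f] = f"
| "cmp_list C c (f # g # fs) = Cmp C f (cmp_list C (Dom C f) (g # fs))"

text \<open>Replace f_i, f_{i+1} by f_i \<circ> f_{i+1} (i is 1-based).\<close>
definition bw_merge :: "('o, 'm) cat \<Rightarrow> nat \<Rightarrow> 'm list \<Rightarrow> 'm list" where
  "bw_merge C i fs = take (i - 1) fs @ [Cmp C (fs ! (i - 1)) (fs ! i)] @ drop (i + 1) fs"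

definition grp_sign :: "'x monoid \<Rightarrow> nat \<Rightarrow> 'x \<Rightarrow> 'x" where
  "grp_sign G i x = (if even i then x else inv\<^bsub>G\<^esub> x)"

definition bw_grp :: "('o, 'm) cat \<Rightarrow> ('m, 'x) natsys \<Rightarrow> nat \<Rightarrow> ('o \<times> 'm list \<Rightarrow> 'x) monoid" where
  "bw_grp C F n = \<lparr>carrier = (\<Pi>\<^sub>E \<sigma>\<in>bw_strings C n. carrier (NF F (cmp_list C (fst \<sigma>) (snd \<sigma>)))),
     monoid.mult = (\<lambda>\<Gamma> \<Gamma>'. \<lambda>\<sigma>. if \<sigma> \<in> bw_strings C n
               then monoid.mult (NF F (cmp_list C (fst \<sigma>) (snd \<sigma>))) (\<Gamma> \<sigma>) (\<Gamma>' \<sigma>) else undefined),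
     monoid.one = (\<lambda>\<sigma>. if \<sigma> \<in> bw_strings C n then monoid.one (NF F (cmp_list C (fst \<sigma>) (snd \<sigma>))) else undefined)\<rparr>"

definition bw_diff :: "('o, 'm) cat \<Rightarrow> ('m, 'x) natsys \<Rightarrow> nat \<Rightarrow> ('o \<times> 'm list \<Rightarrow> 'x) \<Rightarrow> ('o \<times> 'm list \<Rightarrow> 'x)" where
  "bw_diff C F n \<Gamma> = (\<lambda>\<sigma>. if \<sigma> \<in> bw_strings C (Suc n) then
     (let c = fst \<sigma>; fs = snd \<sigma>; G = NF F (cmp_list C c fs) in
        monoid.mult G
          (monoid.mult G
            (lower F (hd fs) (cmp_list C (Dom C (hd fs)) (tl fs)) (\<Gamma> (Dom C (hd fs), tl fs)))
            (finprod G (\<lambda>i. grp_sign G i (\<Gamma> (c, bw_merge C i fs))) {1..n}))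
          (grp_sign G (Suc n) (upper F (last fs) (cmp_list C c (butlast fs)) (\<Gamma> (c, butlast fs)))))
     else undefined)"

definition HH_natsys :: "'k ring \<Rightarrow> ('o, 'm) cat \<Rightarrow> ('o \<Rightarrow> ('k, 'a) module) \<Rightarrow> ('m \<Rightarrow> 'a \<Rightarrow> 'a) \<Rightarrow>
    ('o \<Rightarrow> ('k, 'b) module) \<Rightarrow> ('m \<Rightarrow> 'b \<Rightarrow> 'b) \<Rightarrow> nat \<Rightarrow> ('m, 'a list \<Rightarrow> 'b) natsys" where
  "HH_natsys K C A Af M Mf q = \<lparr>
     NF = (\<lambda>f. HH_grp K (A (Cod C f)) (M (Dom C f)) q),
     lower = (\<lambda>\<alpha> f \<Gamma>. \<lambda>xs. if valid_args (A (Cod C \<alpha>)) q xs then \<Gamma> (map (Af \<alpha>) xs) else undefined),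
     upper = (\<lambda>\<beta> f \<Gamma>. \<lambda>xs. if valid_args (A (Cod C f)) q xs then Mf \<beta> (\<Gamma> xs) else undefined)\<rparr>"

section \<open>Gerstenhaber--Schack cochains with fixed Hochschild degree q\<close>

text \<open>Strings c_0 --g_1--> c_1 --> ... --g_p--> c_p, represented as (c_0, [g_1, ..., g_p]).\<close>
definition gs_strings :: "('o, 'm) cat \<Rightarrow> nat \<Rightarrow> ('o \<times> 'm list) set" where
  "gs_strings C p = {(c, gs). c \<in> Ob C \<and> length gs = p \<and> set gs \<subseteq> Ar C \<and>
     (gs \<noteq> [] \<longrightarrow> Dom C (hd gs) = c) \<and>
     (\<forall>i. Suc i < p \<longrightarrow> Cod C (gs ! i) = Dom C (gs ! Suc i))}"

definition gs_end :: "('o, 'm) cat \<Rightarrow> 'o \<times> 'm list \<Rightarrow> 'o" where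
  "gs_end C \<sigma> = (if snd \<sigma> = [] then fst \<sigma> else Cod C (last (snd \<sigma>)))"

text \<open>Delete c_r (0 < r < length): replace g_r, g_{r+1} by g_{r+1} \<circ> g_r.\<close>
definition gs_merge :: "('o, 'm) cat \<Rightarrow> nat \<Rightarrow> 'm list \<Rightarrow> 'm list" where
  "gs_merge C r gs = take (r - 1) gs @ [Cmp C (gs ! r) (gs ! (r - 1))] @ drop (r + 1) gs"

definition mod_sign :: "('k, 'b) module \<Rightarrow> nat \<Rightarrow> 'b \<Rightarrow> 'b" where
  "mod_sign N i x = (if even i then x else a_inv N x)"

definition gs_grp :: "'k ring \<Rightarrow> ('o, 'm) cat \<Rightarrow> ('o \<Rightarrow> ('k, 'a) module) \<Rightarrow>
    ('o \<Rightarrow> ('k, 'b) module) \<Rightarrow> nat \<Rightarrow> nat \<Rightarrow> ('o \<times> 'm list \<Rightarrow> 'a list \<Rightarrow> 'b) monoid" where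
  "gs_grp K C A M q p = \<lparr>carrier = (\<Pi>\<^sub>E \<sigma>\<in>gs_strings C p. HH K (A (gs_end C \<sigma>)) (M (fst \<sigma>)) q),
     monoid.mult = (\<lambda>\<Gamma> \<Gamma>'. \<lambda>\<sigma>. if \<sigma> \<in> gs_strings C p
               then monoid.mult (HH_grp K (A (gs_end C \<sigma>)) (M (fst \<sigma>)) q) (\<Gamma> \<sigma>) (\<Gamma>' \<sigma>) else undefined),
     monoid.one = (\<lambda>\<sigma>. if \<sigma> \<in> gs_strings C p then monoid.one (HH_grp K (A (gs_end C \<sigma>)) (M (fst \<sigma>)) q) else undefined)\<rparr>"

text \<open>d_simp : C^{p,q} \<rightarrow> C^{p+1,q}; for sigma with P = p+1 arrows,
  (d \<Gamma>)^sigma = T \<circ> \<Gamma>^{d_0 sigma} + sum_{r=1}^{P-1} (-1)^r \<Gamma>^{d_r sigma} + (-1)^P \<Gamma>^{d_P sigma} \<circ> phi^{\<otimes>q}.\<close>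
definition gs_diff :: "'k ring \<Rightarrow> ('o, 'm) cat \<Rightarrow> ('o \<Rightarrow> ('k, 'a) module) \<Rightarrow> ('m \<Rightarrow> 'a \<Rightarrow> 'a) \<Rightarrow>
    ('o \<Rightarrow> ('k, 'b) module) \<Rightarrow> ('m \<Rightarrow> 'b \<Rightarrow> 'b) \<Rightarrow> nat \<Rightarrow> nat \<Rightarrow>
    ('o \<times> 'm list \<Rightarrow> 'a list \<Rightarrow> 'b) \<Rightarrow> ('o \<times> 'm list \<Rightarrow> 'a list \<Rightarrow> 'b)" where
  "gs_diff K C A Af M Mf q p \<Gamma> = (\<lambda>\<sigma>. if \<sigma> \<in> gs_strings C (Suc p) then
     (let c = fst \<sigma>; gs = snd \<sigma>; N = M c in
      (\<lambda>xs. if valid_args (A (gs_end C \<sigma>)) q xs then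
         ring.add N
           (ring.add N
             (Mf (hd gs) (\<Gamma> (Cod C (hd gs), tl gs) xs))
             (finsum N (\<lambda>r. mod_sign N r (\<Gamma> (c, gs_merge C r gs) xs)) {1..p}))
           (mod_sign N (Suc p) (\<Gamma> (c, butlast gs) (map (Af (last gs)) xs)))
       else undefined))
     else undefined)"

definition cochain_iso :: "(nat \<Rightarrow> 'x monoid) \<Rightarrow> (nat \<Rightarrow> 'x \<Rightarrow> 'x) \<Rightarrow>
    (nat \<Rightarrow> 'y monoid) \<Rightarrow> (nat \<Rightarrow> 'y \<Rightarrow> 'y) \<Rightarrow> (nat \<Rightarrow> 'x \<Rightarrow> 'y) \<Rightarrow> bool" where
  "cochain_iso G d H e \<Phi> \<longleftrightarrow>
     (\<forall>n. \<Phi> n \<in> iso (G n) (H n) \<and> (\<forall>x\<in>carrier (G n). \<Phi> (Suc n) (d n x) = e n (\<Phi> n x)))"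

definition complexes_isomorphic :: "(nat \<Rightarrow> 'x monoid) \<Rightarrow> (nat \<Rightarrow> 'x \<Rightarrow> 'x) \<Rightarrow>
    (nat \<Rightarrow> 'y monoid) \<Rightarrow> (nat \<Rightarrow> 'y \<Rightarrow> 'y) \<Rightarrow> bool" where
  "complexes_isomorphic G d H e \<longleftrightarrow> (\<exists>\<Phi>. cochain_iso G d H e \<Phi>)"

end

theory Submission
  imports Defs
begin


lemma valid_args_upd:
  "valid_args B q xs \<Longrightarrow> y \<in> carrier B \<Longrightarrow> valid_args B q (xs[i := y])"
  unfolding valid_args_def by (metis length_list_update set_update_subset_insert insert_subset subset_trans)

lemma valid_args_nth: "valid_args B q xs \<Longrightarrow> i < q \<Longrightarrow> xs ! i \<in> carrier B"
  unfolding valid_args_def by auto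

definition hsign :: "('k, 'a) module \<Rightarrow> ('k, 'b) module \<Rightarrow> nat \<Rightarrow> nat \<Rightarrow> ('a list \<Rightarrow> 'b) \<Rightarrow> ('a list \<Rightarrow> 'b)" where
  "hsign B N q k g = (\<lambda>xs. if valid_args B q xs then mod_sign N k (g xs) else undefined)"

lemma HH_D:
  assumes "g \<in> HH K B N q"
  shows "valid_args B q xs \<Longrightarrow> g xs \<in> carrier N"
    and "\<not> valid_args B q xs \<Longrightarrow> g xs = undefined"
    and "valid_args B q xs \<Longrightarrow> i < q \<Longrightarrow> y \<in> carrier B \<Longrightarrow>
        g (xs[i := ring.add B (xs ! i) y]) = ring.add N (g xs) (g (xs[i := y]))"
    and "valid_args B q xs \<Longrightarrow> i < q \<Longrightarrow> a \<in> carrier K \<Longrightarrow>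
        g (xs[i := module.smult B a (xs ! i)]) = module.smult N a (g xs)"
  using assms unfolding HH_def by auto

lemma HH_ext: "g \<in> HH K B N q \<Longrightarrow> g' \<in> HH K B N q \<Longrightarrow> (\<And>xs. valid_args B q xs \<Longrightarrow> g xs = g' xs) \<Longrightarrow> g = g'"
  by (rule ext) (metis HH_D(2))

lemma mod_sign_closed: "abelian_group N \<Longrightarrow> x \<in> carrier N \<Longrightarrow> mod_sign N k x \<in> carrier N"
  by (simp add: mod_sign_def abelian_group.a_inv_closed)

lemma mod_sign_add: "abelian_group N \<Longrightarrow> x \<in> carrier N \<Longrightarrow> y \<in> carrier N \<Longrightarrow>
   mod_sign N k (ring.add N x y) = ring.add N (mod_sign N k x) (mod_sign N k y)"
  by (simp add: mod_sign_def abelian_group.minus_add)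

lemma mod_sign_mod_sign: "abelian_group N \<Longrightarrow> x \<in> carrier N \<Longrightarrow>
   mod_sign N a (mod_sign N b x) = mod_sign N (a + b) x"
  by (simp add: mod_sign_def abelian_group.minus_minus)

lemma mod_sign_parity: "even a = even b \<Longrightarrow> mod_sign N a x = mod_sign N b x"
  by (simp add: mod_sign_def)

lemma mod_sign_even: "even a \<Longrightarrow> mod_sign N a x = x"
  by (simp add: mod_sign_def)

lemma mod_sign_smult: "module K N \<Longrightarrow> a \<in> carrier K \<Longrightarrow> x \<in> carrier N \<Longrightarrow>
   mod_sign N k (module.smult N a x) = module.smult N a (mod_sign N k x)"
  by (simp add: mod_sign_def module.smult_r_minus)

lemma HH_hsign:
  assumes mB: "module K B" and mN: "module K N" and g: "g \<in> HH K B N q"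
  shows "hsign B N q k g \<in> HH K B N q"
proof -
  interpret B: module K B by fact
  interpret N: module K N by fact
  have agN: "abelian_group N" by (simp add: N.abelian_group_axioms)
  show ?thesis
    unfolding HH_def mem_Collect_eq
  proof (intro conjI allI impI)
    fix xs assume "valid_args B q xs"
    then show "hsign B N q k g xs \<in> carrier N"
      using HH_D(1)[OF g] agN by (simp add: hsign_def mod_sign_closed)
  next
    fix xs assume "\<not> valid_args B q xs"
    then show "hsign B N q k g xs = undefined" by (simp add: hsign_def)
  next
    fix xs i y assume v: "valid_args B q xs" and i: "i < q" and y: "y \<in> carrier B"
    have xi: "xs ! i \<in> carrier B" using valid_args_nth[OF v i] .
    have v1: "valid_args B q (xs[i := xs ! i \<oplus>\<^bsub>B\<^esub> y])" using v xi y by (simp add: valid_args_upd)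
    have v2: "valid_args B q (xs[i := y])" using v y by (simp add: valid_args_upd)
    show "hsign B N q k g (xs[i := xs ! i \<oplus>\<^bsub>B\<^esub> y]) = hsign B N q k g xs \<oplus>\<^bsub>N\<^esub> hsign B N q k g (xs[i := y])"
      using v v1 v2 HH_D[OF g] i y agN by (simp add: hsign_def mod_sign_add)
  next
    fix xs i a assume v: "valid_args B q xs" and i: "i < q" and a: "a \<in> carrier K"
    have xi: "xs ! i \<in> carrier B" using valid_args_nth[OF v i] .
    have v1: "valid_args B q (xs[i := a \<odot>\<^bsub>B\<^esub> (xs ! i)])" using v xi a by (simp add: valid_args_upd)
    show "hsign B N q k g (xs[i := a \<odot>\<^bsub>B\<^esub> (xs ! i)]) = a \<odot>\<^bsub>N\<^esub> hsign B N q k g xs"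
      using v v1 HH_D[OF g] i a mN by (simp add: hsign_def mod_sign_smult)
  qed
qed

lemma hsign_hsign:
  assumes mN: "abelian_group N" and g: "g \<in> HH K B N q"
  shows "hsign B N q a (hsign B N q b g) = hsign B N q (a + b) g"
  unfolding hsign_def using HH_D(1)[OF g] mN by (auto simp: mod_sign_mod_sign)

lemma hsign_even:
  assumes g: "g \<in> HH K B N q" and "even k"
  shows "hsign B N q k g = g"
  unfolding hsign_def using HH_D(2)[OF g] assms(2) by (auto simp: mod_sign_even)

lemma hsign_parity: "even a = even b \<Longrightarrow> hsign B N q a g = hsign B N q b g"
  unfolding hsign_def by (intro ext) (metis mod_sign_parity)

lemma HH_upper:
  assumes mB: "module K B" and m1: "module K N1" and m2: "module K N2"
    and h: "k_linear K N1 N2 h" and g: "g \<in> HH K B N1 q"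
  shows "(\<lambda>xs. if valid_args B q xs then h (g xs) else undefined) \<in> HH K B N2 q"
proof -
  interpret B: module K B by fact
  have hc: "h \<in> carrier N1 \<rightarrow> carrier N2" and ha: "\<forall>x\<in>carrier N1. \<forall>y\<in>carrier N1. h (x \<oplus>\<^bsub>N1\<^esub> y) = h x \<oplus>\<^bsub>N2\<^esub> h y"
    and hs: "\<forall>a\<in>carrier K. \<forall>x\<in>carrier N1. h (a \<odot>\<^bsub>N1\<^esub> x) = a \<odot>\<^bsub>N2\<^esub> h x"
    using h unfolding k_linear_def by auto
  show ?thesis
    unfolding HH_def mem_Collect_eq
  proof (intro conjI allI impI)
    fix xs assume "valid_args B q xs"
    then show "(if valid_args B q xs then h (g xs) else undefined) \<in> carrier N2"
      using HH_D(1)[OF g] hc by auto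
  next
    fix xs assume "\<not> valid_args B q xs"
    then show "(if valid_args B q xs then h (g xs) else undefined) = undefined" by simp
  next
    fix xs i y assume v: "valid_args B q xs" and i: "i < q" and y: "y \<in> carrier B"
    have xi: "xs ! i \<in> carrier B" using valid_args_nth[OF v i] .
    have v1: "valid_args B q (xs[i := xs ! i \<oplus>\<^bsub>B\<^esub> y])" using v xi y by (simp add: valid_args_upd)
    have v2: "valid_args B q (xs[i := y])" using v y by (simp add: valid_args_upd)
    show "(if valid_args B q (xs[i := xs ! i \<oplus>\<^bsub>B\<^esub> y]) then h (g (xs[i := xs ! i \<oplus>\<^bsub>B\<^esub> y])) else undefined) =
          (if valid_args B q xs then h (g xs) else undefined) \<oplus>\<^bsub>N2\<^esub> (if valid_args B q (xs[i := y]) then h (g (xs[i := y])) else undefined)"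
      using v v1 v2 HH_D[OF g] i y ha by simp
  next
    fix xs i a assume v: "valid_args B q xs" and i: "i < q" and a: "a \<in> carrier K"
    have xi: "xs ! i \<in> carrier B" using valid_args_nth[OF v i] .
    have v1: "valid_args B q (xs[i := a \<odot>\<^bsub>B\<^esub> (xs ! i)])" using v xi a by (simp add: valid_args_upd)
    show "(if valid_args B q (xs[i := a \<odot>\<^bsub>B\<^esub> (xs ! i)]) then h (g (xs[i := a \<odot>\<^bsub>B\<^esub> (xs ! i)])) else undefined) =
          a \<odot>\<^bsub>N2\<^esub> (if valid_args B q xs then h (g xs) else undefined)"
      using v v1 HH_D[OF g] i a hs by simp
  qed
qed

lemma linear_mod_sign:
  assumes m1: "module K N1" and m2: "module K N2" and h: "k_linear K N1 N2 h" and x: "x \<in> carrier N1"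
  shows "h (mod_sign N1 k x) = mod_sign N2 k (h x)"
proof (cases "even k")
  case True then show ?thesis by (simp add: mod_sign_def)
next
  case False
  interpret N1: module K N1 by fact
  interpret N2: module K N2 by fact
  have hc: "h \<in> carrier N1 \<rightarrow> carrier N2" and ha: "\<forall>x\<in>carrier N1. \<forall>y\<in>carrier N1. h (x \<oplus>\<^bsub>N1\<^esub> y) = h x \<oplus>\<^bsub>N2\<^esub> h y"
    using h unfolding k_linear_def by auto
  have h0: "h \<zero>\<^bsub>N1\<^esub> = \<zero>\<^bsub>N2\<^esub>"
  proof -
    have "h \<zero>\<^bsub>N1\<^esub> = h \<zero>\<^bsub>N1\<^esub> \<oplus>\<^bsub>N2\<^esub> h \<zero>\<^bsub>N1\<^esub>" using ha by (metis N1.zero_closed N1.l_zero)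
    then show ?thesis using hc by (metis N1.zero_closed N2.l_zero N2.add.right_cancel N2.zero_closed funcset_mem)
  qed
  have "h (\<ominus>\<^bsub>N1\<^esub> x) \<oplus>\<^bsub>N2\<^esub> h x = \<zero>\<^bsub>N2\<^esub>" using ha x h0 by (metis N1.a_inv_closed N1.l_neg)
  then have "\<ominus>\<^bsub>N2\<^esub> h x = h (\<ominus>\<^bsub>N1\<^esub> x)"
    using hc x by (metis N2.minus_equality N1.a_inv_closed funcset_mem)
  then show ?thesis using False by (simp add: mod_sign_def)
qed




lemma HH_grp_simps:
  "carrier (HH_grp K B N q) = HH K B N q"
  "monoid.mult (HH_grp K B N q) g h = (\<lambda>xs. if valid_args B q xs then ring.add N (g xs) (h xs) else undefined)"
  "monoid.one (HH_grp K B N q) = (\<lambda>xs. if valid_args B q xs then ring.zero N else undefined)"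
  by (simp_all add: HH_grp_def)

lemma HH_add:
  assumes mB: "module K B" and mN: "module K N" and g: "g \<in> HH K B N q" and h: "h \<in> HH K B N q"
  shows "(\<lambda>xs. if valid_args B q xs then ring.add N (g xs) (h xs) else undefined) \<in> HH K B N q"
proof -
  interpret B: module K B by fact
  interpret N: module K N by fact
  show ?thesis
    unfolding HH_def mem_Collect_eq
  proof (intro conjI allI impI)
    fix xs assume "valid_args B q xs"
    then show "(if valid_args B q xs then g xs \<oplus>\<^bsub>N\<^esub> h xs else undefined) \<in> carrier N"
      using HH_D(1)[OF g] HH_D(1)[OF h] by auto
  next
    fix xs assume "\<not> valid_args B q xs"
    then show "(if valid_args B q xs then g xs \<oplus>\<^bsub>N\<^esub> h xs else undefined) = undefined" by simp
  next
    fix xs i y assume v: "valid_args B q xs" and i: "i < q" and y: "y \<in> carrier B"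
    have xi: "xs ! i \<in> carrier B" using valid_args_nth[OF v i] .
    have v1: "valid_args B q (xs[i := xs ! i \<oplus>\<^bsub>B\<^esub> y])" using v xi y by (simp add: valid_args_upd)
    have v2: "valid_args B q (xs[i := y])" using v y by (simp add: valid_args_upd)
    have c: "g xs \<in> carrier N" "h xs \<in> carrier N" "g (xs[i := y]) \<in> carrier N" "h (xs[i := y]) \<in> carrier N"
      using HH_D(1)[OF g] HH_D(1)[OF h] v v2 by auto
    show "(if valid_args B q (xs[i := xs ! i \<oplus>\<^bsub>B\<^esub> y]) then g (xs[i := xs ! i \<oplus>\<^bsub>B\<^esub> y]) \<oplus>\<^bsub>N\<^esub> h (xs[i := xs ! i \<oplus>\<^bsub>B\<^esub> y]) else undefined) =
          (if valid_args B q xs then g xs \<oplus>\<^bsub>N\<^esub> h xs else undefined) \<oplus>\<^bsub>N\<^esub> (if valid_args B q (xs[i := y]) then g (xs[i := y]) \<oplus>\<^bsub>N\<^esub> h (xs[i := y]) else undefined)"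
      using v v1 v2 HH_D(3)[OF g v i y] HH_D(3)[OF h v i y] c by (simp add: N.a_ac)
  next
    fix xs i a assume v: "valid_args B q xs" and i: "i < q" and a: "a \<in> carrier K"
    have xi: "xs ! i \<in> carrier B" using valid_args_nth[OF v i] .
    have v1: "valid_args B q (xs[i := a \<odot>\<^bsub>B\<^esub> (xs ! i)])" using v xi a by (simp add: valid_args_upd)
    have c: "g xs \<in> carrier N" "h xs \<in> carrier N"
      using HH_D(1)[OF g] HH_D(1)[OF h] v by auto
    show "(if valid_args B q (xs[i := a \<odot>\<^bsub>B\<^esub> (xs ! i)]) then g (xs[i := a \<odot>\<^bsub>B\<^esub> (xs ! i)]) \<oplus>\<^bsub>N\<^esub> h (xs[i := a \<odot>\<^bsub>B\<^esub> (xs ! i)]) else undefined) =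
          a \<odot>\<^bsub>N\<^esub> (if valid_args B q xs then g xs \<oplus>\<^bsub>N\<^esub> h xs else undefined)"
      using v v1 HH_D(4)[OF g v i a] HH_D(4)[OF h v i a] c a by (simp add: N.smult_r_distr)
  qed
qed

lemma HH_zero:
  assumes mB: "module K B" and mN: "module K N"
  shows "(\<lambda>xs. if valid_args B q xs then ring.zero N else undefined) \<in> HH K B N q"
proof -
  interpret B: module K B by fact
  interpret N: module K N by fact
  show ?thesis
    unfolding HH_def mem_Collect_eq
  proof (intro conjI allI impI)
    fix xs i y assume v: "valid_args B q xs" and i: "i < q" and y: "y \<in> carrier B"
    have xi: "xs ! i \<in> carrier B" using valid_args_nth[OF v i] .
    have v1: "valid_args B q (xs[i := xs ! i \<oplus>\<^bsub>B\<^esub> y])" using v xi y by (simp add: valid_args_upd)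
    have v2: "valid_args B q (xs[i := y])" using v y by (simp add: valid_args_upd)
    show "(if valid_args B q (xs[i := xs ! i \<oplus>\<^bsub>B\<^esub> y]) then \<zero>\<^bsub>N\<^esub> else undefined) =
          (if valid_args B q xs then \<zero>\<^bsub>N\<^esub> else undefined) \<oplus>\<^bsub>N\<^esub> (if valid_args B q (xs[i := y]) then \<zero>\<^bsub>N\<^esub> else undefined)"
      using v v1 v2 by simp
  next
    fix xs i a assume v: "valid_args B q xs" and i: "i < q" and a: "a \<in> carrier K"
    have xi: "xs ! i \<in> carrier B" using valid_args_nth[OF v i] .
    have v1: "valid_args B q (xs[i := a \<odot>\<^bsub>B\<^esub> (xs ! i)])" using v xi a by (simp add: valid_args_upd)
    show "(if valid_args B q (xs[i := a \<odot>\<^bsub>B\<^esub> (xs ! i)]) then \<zero>\<^bsub>N\<^esub> else undefined) =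
          a \<odot>\<^bsub>N\<^esub> (if valid_args B q xs then \<zero>\<^bsub>N\<^esub> else undefined)"
      using v v1 a by simp
  qed auto
qed

lemma HH_grp_comm_group:
  assumes mB: "module K B" and mN: "module K N"
  shows "comm_group (HH_grp K B N q)"
proof -
  interpret N: module K N by fact
  have agN: "abelian_group N" by (simp add: N.abelian_group_axioms)
  show ?thesis
  proof (rule comm_groupI, simp_all only: HH_grp_simps)
    fix x y assume "x \<in> HH K B N q" "y \<in> HH K B N q"
    then show "(\<lambda>xs. if valid_args B q xs then x xs \<oplus>\<^bsub>N\<^esub> y xs else undefined) \<in> HH K B N q"
      using HH_add[OF mB mN] by blast
  next
    show "(\<lambda>xs. if valid_args B q xs then \<zero>\<^bsub>N\<^esub> else undefined) \<in> HH K B N q"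
      using HH_zero[OF mB mN] .
  next
    fix x y z assume x: "x \<in> HH K B N q" and y: "y \<in> HH K B N q" and z: "z \<in> HH K B N q"
    show "(\<lambda>xs. if valid_args B q xs then (if valid_args B q xs then x xs \<oplus>\<^bsub>N\<^esub> y xs else undefined) \<oplus>\<^bsub>N\<^esub> z xs else undefined) =
          (\<lambda>xs. if valid_args B q xs then x xs \<oplus>\<^bsub>N\<^esub> (if valid_args B q xs then y xs \<oplus>\<^bsub>N\<^esub> z xs else undefined) else undefined)"
      using HH_D(1)[OF x] HH_D(1)[OF y] HH_D(1)[OF z] by (intro ext) (simp add: N.a_assoc)
  next
    fix x y assume x: "x \<in> HH K B N q" and y: "y \<in> HH K B N q"
    show "(\<lambda>xs. if valid_args B q xs then x xs \<oplus>\<^bsub>N\<^esub> y xs else undefined) =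
          (\<lambda>xs. if valid_args B q xs then y xs \<oplus>\<^bsub>N\<^esub> x xs else undefined)"
      using HH_D(1)[OF x] HH_D(1)[OF y] by (intro ext) (simp add: N.a_comm)
  next
    fix x assume x: "x \<in> HH K B N q"
    show "(\<lambda>xs. if valid_args B q xs then (if valid_args B q xs then \<zero>\<^bsub>N\<^esub> else undefined) \<oplus>\<^bsub>N\<^esub> x xs else undefined) = x"
      using HH_D(1)[OF x] HH_D(2)[OF x] by (intro ext) auto
  next
    fix x assume x: "x \<in> HH K B N q"
    show "\<exists>y\<in>HH K B N q. (\<lambda>xs. if valid_args B q xs then y xs \<oplus>\<^bsub>N\<^esub> x xs else undefined) =
                         (\<lambda>xs. if valid_args B q xs then \<zero>\<^bsub>N\<^esub> else undefined)"
    proof (intro bexI)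
      show "hsign B N q 1 x \<in> HH K B N q" using HH_hsign[OF mB mN x] .
      show "(\<lambda>xs. if valid_args B q xs then hsign B N q 1 x xs \<oplus>\<^bsub>N\<^esub> x xs else undefined) =
            (\<lambda>xs. if valid_args B q xs then \<zero>\<^bsub>N\<^esub> else undefined)"
        using HH_D(1)[OF x] by (intro ext) (simp add: hsign_def mod_sign_def N.l_neg)
    qed
  qed
qed

lemma HH_grp_inv:
  assumes mB: "module K B" and mN: "module K N" and g: "g \<in> HH K B N q"
  shows "inv\<^bsub>HH_grp K B N q\<^esub> g = hsign B N q 1 g"
proof -
  interpret G: comm_group "HH_grp K B N q" using HH_grp_comm_group[OF mB mN] .
  interpret N: module K N by fact
  show ?thesis
  proof (rule G.inv_equality)
    show "hsign B N q 1 g \<otimes>\<^bsub>HH_grp K B N q\<^esub> g = \<one>\<^bsub>HH_grp K B N q\<^esub>"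
      using HH_D(1)[OF g] by (intro ext) (simp add: HH_grp_simps hsign_def mod_sign_def N.l_neg)
  qed (use g HH_hsign[OF mB mN g] in \<open>simp_all add: HH_grp_simps\<close>)
qed

lemma HH_grp_sign:
  assumes mB: "module K B" and mN: "module K N" and g: "g \<in> HH K B N q"
  shows "grp_sign (HH_grp K B N q) k g = hsign B N q k g"
  using HH_grp_inv[OF assms] hsign_even[OF g, of k] hsign_parity[of 1 k B N q g]
  by (auto simp: grp_sign_def)

lemma HH_finprod:
  assumes mB: "module K B" and mN: "module K N" and I: "finite I" and f: "f \<in> I \<rightarrow> HH K B N q"
  shows "finprod (HH_grp K B N q) f I = (\<lambda>xs. if valid_args B q xs then finsum N (\<lambda>i. f i xs) I else undefined)"
  using I f
proof (induction I rule: finite_induct)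
  case empty
  interpret G: comm_group "HH_grp K B N q" using HH_grp_comm_group[OF mB mN] .
  interpret N: module K N by fact
  show ?case by (intro ext) (simp add: HH_grp_simps N.finsum_empty)
next
  case (insert a F)
  interpret G: comm_group "HH_grp K B N q" using HH_grp_comm_group[OF mB mN] .
  interpret N: module K N by fact
  have fa: "f a \<in> HH K B N q" and fF: "f \<in> F \<rightarrow> HH K B N q" using insert by auto
  have "finprod (HH_grp K B N q) f (insert a F) = f a \<otimes>\<^bsub>HH_grp K B N q\<^esub> finprod (HH_grp K B N q) f F"
    using insert fa fF by (simp add: HH_grp_simps)
  also have "\<dots> = (\<lambda>xs. if valid_args B q xs then finsum N (\<lambda>i. f i xs) (insert a F) else undefined)"
  proof (intro ext)
    fix xs show "(f a \<otimes>\<^bsub>HH_grp K B N q\<^esub> finprod (HH_grp K B N q) f F) xs = (if valid_args B q xs then finsum N (\<lambda>i. f i xs) (insert a F) else undefined)"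
    proof (cases "valid_args B q xs")
      case True
      have "(\<lambda>i. f i xs) \<in> F \<rightarrow> carrier N" using fF True HH_D(1) by blast
      moreover have "f a xs \<in> carrier N" using fa True HH_D(1) by blast
      ultimately show ?thesis using True insert by (simp add: HH_grp_simps N.finsum_insert)
    qed (simp add: HH_grp_simps)
  qed
  finally show ?case .
qed




fun bwp :: "('o, 'm) cat \<Rightarrow> 'o \<Rightarrow> 'm list \<Rightarrow> bool" where
  "bwp C d [] = (d \<in> Ob C)"
| "bwp C d (f # fs) = (d \<in> Ob C \<and> f \<in> Ar C \<and> Cod C f = d \<and> bwp C (Dom C f) fs)"

fun gsp :: "('o, 'm) cat \<Rightarrow> 'o \<Rightarrow> 'm list \<Rightarrow> bool" where
  "gsp C c [] = (c \<in> Ob C)"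
| "gsp C c (g # gs) = (c \<in> Ob C \<and> g \<in> Ar C \<and> Dom C g = c \<and> gsp C (Cod C g) gs)"

fun bws :: "('o, 'm) cat \<Rightarrow> 'o \<Rightarrow> 'm list \<Rightarrow> 'o" where
  "bws C d [] = d"
| "bws C d (f # fs) = bws C (Dom C f) fs"

lemma all_Suc_less: "(\<forall>i. Suc i < Suc m \<longrightarrow> P i) = ((0 < m \<longrightarrow> P 0) \<and> (\<forall>i. Suc i < m \<longrightarrow> P (Suc i)))"
  by (metis Suc_less_eq gr0_conv_Suc not0_implies_Suc zero_less_Suc)

lemma cat_DomOb: "category C \<Longrightarrow> f \<in> Ar C \<Longrightarrow> Dom C f \<in> Ob C"
  and cat_CodOb: "category C \<Longrightarrow> f \<in> Ar C \<Longrightarrow> Cod C f \<in> Ob C"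
  unfolding category_def by auto

lemma cat_Cmp: "category C \<Longrightarrow> f \<in> Ar C \<Longrightarrow> g \<in> Ar C \<Longrightarrow> Cod C f = Dom C g \<Longrightarrow>
   Cmp C g f \<in> Ar C \<and> Dom C (Cmp C g f) = Dom C f \<and> Cod C (Cmp C g f) = Cod C g"
  unfolding category_def by auto

lemma cat_Idm: "category C \<Longrightarrow> c \<in> Ob C \<Longrightarrow> Idm C c \<in> Ar C \<and> Dom C (Idm C c) = c \<and> Cod C (Idm C c) = c"
  unfolding category_def by auto

lemma bw_strings_iff:
  assumes cat: "category C"
  shows "(d, fs) \<in> bw_strings C n \<longleftrightarrow> length fs = n \<and> bwp C d fs"
proof (induction fs arbitrary: d n)
  case Nil
  then show ?case by (auto simp: bw_strings_def)
next
  case (Cons f fs)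
  have "(d, f # fs) \<in> bw_strings C n \<longleftrightarrow> n = Suc (length fs) \<and> d \<in> Ob C \<and> f \<in> Ar C \<and> set fs \<subseteq> Ar C \<and> Cod C f = d \<and>
     (\<forall>i. Suc i < Suc (length fs) \<longrightarrow> Dom C ((f # fs) ! i) = Cod C ((f # fs) ! Suc i))"
    by (auto simp: bw_strings_def)
  also have "\<dots> \<longleftrightarrow> n = Suc (length fs) \<and> d \<in> Ob C \<and> f \<in> Ar C \<and> set fs \<subseteq> Ar C \<and> Cod C f = d \<and>
     (fs \<noteq> [] \<longrightarrow> Cod C (hd fs) = Dom C f) \<and> (\<forall>i. Suc i < length fs \<longrightarrow> Dom C (fs ! i) = Cod C (fs ! Suc i))"
    unfolding all_Suc_less by (auto simp: hd_conv_nth)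
  also have "\<dots> \<longleftrightarrow> n = Suc (length fs) \<and> d \<in> Ob C \<and> f \<in> Ar C \<and> Cod C f = d \<and> (Dom C f, fs) \<in> bw_strings C (length fs)"
    using cat_DomOb[OF cat] by (auto simp: bw_strings_def)
  also have "\<dots> \<longleftrightarrow> length (f # fs) = n \<and> bwp C d (f # fs)"
    using Cons.IH by auto
  finally show ?case .
qed

lemma gs_strings_iff:
  assumes cat: "category C"
  shows "(c, gs) \<in> gs_strings C n \<longleftrightarrow> length gs = n \<and> gsp C c gs"
proof (induction gs arbitrary: c n)
  case Nil
  then show ?case by (auto simp: gs_strings_def)
next
  case (Cons g gs)
  have "(c, g # gs) \<in> gs_strings C n \<longleftrightarrow> n = Suc (length gs) \<and> c \<in> Ob C \<and> g \<in> Ar C \<and> set gs \<subseteq> Ar C \<and> Dom C g = c \<and>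
     (\<forall>i. Suc i < Suc (length gs) \<longrightarrow> Cod C ((g # gs) ! i) = Dom C ((g # gs) ! Suc i))"
    by (auto simp: gs_strings_def)
  also have "\<dots> \<longleftrightarrow> n = Suc (length gs) \<and> c \<in> Ob C \<and> g \<in> Ar C \<and> set gs \<subseteq> Ar C \<and> Dom C g = c \<and>
     (gs \<noteq> [] \<longrightarrow> Dom C (hd gs) = Cod C g) \<and> (\<forall>i. Suc i < length gs \<longrightarrow> Cod C (gs ! i) = Dom C (gs ! Suc i))"
    unfolding all_Suc_less by (auto simp: hd_conv_nth)
  also have "\<dots> \<longleftrightarrow> n = Suc (length gs) \<and> c \<in> Ob C \<and> g \<in> Ar C \<and> Dom C g = c \<and> (Cod C g, gs) \<in> gs_strings C (length gs)"
    using cat_CodOb[OF cat] by (auto simp: gs_strings_def)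
  also have "\<dots> \<longleftrightarrow> length (g # gs) = n \<and> gsp C c (g # gs)"
    using Cons.IH by auto
  finally show ?case .
qed

lemma gs_end_Nil: "gs_end C (c, []) = c" by (simp add: gs_end_def)
lemma gs_end_Cons: "gs_end C (c, g # gs) = gs_end C (Cod C g, gs)" by (simp add: gs_end_def)
lemma gs_end_snoc: "gs_end C (c, gs @ [g]) = Cod C g" by (simp add: gs_end_def)

lemma bwp_Ob: "bwp C d fs \<Longrightarrow> d \<in> Ob C" by (cases fs) auto
lemma gsp_Ob: "gsp C c gs \<Longrightarrow> c \<in> Ob C" by (cases gs) auto

lemma bwp_snoc: "bwp C d (fs @ [f]) \<longleftrightarrow> bwp C d fs \<and> f \<in> Ar C \<and> Cod C f = bws C d fs \<and> Dom C f \<in> Ob C"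
  by (induction fs arbitrary: d) (auto dest: bwp_Ob)

lemma bws_snoc: "bws C d (fs @ [f]) = Dom C f"
  by (induction fs arbitrary: d) auto

lemma gsp_snoc: "gsp C c (gs @ [g]) \<longleftrightarrow> gsp C c gs \<and> g \<in> Ar C \<and> Dom C g = gs_end C (c, gs) \<and> Cod C g \<in> Ob C"
  by (induction gs arbitrary: c) (auto simp: gs_end_Cons gs_end_Nil dest: gsp_Ob)

lemma gsp_end_Ob: "category C \<Longrightarrow> gsp C c gs \<Longrightarrow> gs_end C (c, gs) \<in> Ob C"
  by (induction gs arbitrary: c) (auto simp: gs_end_Cons gs_end_Nil)

lemma bws_Ob: "category C \<Longrightarrow> bwp C d fs \<Longrightarrow> bws C d fs \<in> Ob C"
  by (induction fs arbitrary: d) auto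

lemma rb_gsp:
  assumes cat: "category C"
  shows "bwp C d fs \<Longrightarrow> gsp C (bws C d fs) (rev fs) \<and> gs_end C (bws C d fs, rev fs) = d"
proof (induction fs arbitrary: d)
  case Nil then show ?case by (simp add: gs_end_Nil)
next
  case (Cons f fs)
  then show ?case using cat_CodOb[OF cat] by (auto simp: gsp_snoc gs_end_snoc)
qed

lemma rg_bwp:
  assumes cat: "category C"
  shows "gsp C c gs \<Longrightarrow> bwp C (gs_end C (c, gs)) (rev gs) \<and> bws C (gs_end C (c, gs)) (rev gs) = c"
proof (induction gs arbitrary: c)
  case Nil then show ?case by (simp add: gs_end_Nil)
next
  case (Cons g gs)
  then show ?case using cat_DomOb[OF cat] by (auto simp: bwp_snoc bws_snoc gs_end_Cons)
qed

lemma cmp_list_props: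
  assumes cat: "category C"
  shows "bwp C d fs \<Longrightarrow> cmp_list C d fs \<in> Ar C \<and> Cod C (cmp_list C d fs) = d \<and> Dom C (cmp_list C d fs) = bws C d fs"
proof (induction fs arbitrary: d rule: induct_list012)
  case 1
  then show ?case using cat_Idm[OF cat] by auto
next
  case (2 f)
  then show ?case by simp
next
  case (3 f g fs)
  then show ?case using cat_Cmp[OF cat] by auto
qed

lemma bw_merge_1: "bw_merge C (Suc 0) (f # g # fs) = Cmp C f g # fs"
  by (simp add: bw_merge_def)

lemma bw_merge_Cons: "bw_merge C (Suc (Suc j)) (f # fs) = f # bw_merge C (Suc j) fs"
  by (simp add: bw_merge_def)

lemma bw_merge_props:
  assumes cat: "category C"
  shows "bwp C d fs \<Longrightarrow> 1 \<le> i \<Longrightarrow> i < length fs \<Longrightarrow>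
     bwp C d (bw_merge C i fs) \<and> bws C d (bw_merge C i fs) = bws C d fs \<and> length (bw_merge C i fs) = length fs - 1"
proof (induction fs arbitrary: d i)
  case Nil then show ?case by simp
next
  case (Cons f fs)
  show ?case
  proof (cases "i = 1")
    case True
    then obtain g fs' where fs: "fs = g # fs'" using Cons.prems by (cases fs) auto
    then show ?thesis using Cons.prems True cat_Cmp[OF cat, of g f] by (auto simp: bw_merge_1)
  next
    case False
    then obtain j where i: "i = Suc (Suc j)" using Cons.prems by (metis One_nat_def Suc_le_D le_antisym not0_implies_Suc less_eq_nat.simps(1) nat.exhaust)
    have "bwp C (Dom C f) (bw_merge C (Suc j) fs) \<and> bws C (Dom C f) (bw_merge C (Suc j) fs) = bws C (Dom C f) fs
          \<and> length (bw_merge C (Suc j) fs) = length fs - 1"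
      using Cons.IH[of "Dom C f" "Suc j"] Cons.prems i by auto
    then show ?thesis using Cons.prems i by (auto simp: bw_merge_Cons)
  qed
qed

lemma rev_bw_merge:
  assumes len: "length fs = Suc n" and i1: "1 \<le> i" and iN: "i \<le> n"
  shows "rev (bw_merge C i fs) = gs_merge C (Suc n - i) (rev fs)"
proof -
  have a: "take (Suc n - i - 1) (rev fs) = rev (drop (i + 1) fs)"
    using len i1 iN by (simp add: take_rev)
  have b: "rev fs ! (Suc n - i) = fs ! (i - 1)"
    using len i1 iN by (simp add: rev_nth)
  have c: "rev fs ! (Suc n - i - 1) = fs ! i"
    using len i1 iN by (simp add: rev_nth)
  have d: "drop (Suc n - i + 1) (rev fs) = rev (take (i - 1) fs)"
    using len i1 iN by (simp add: drop_rev)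
  show ?thesis unfolding bw_merge_def gs_merge_def using a b c d by simp
qed




fun tri :: "nat \<Rightarrow> nat" where
  "tri 0 = 0"
| "tri (Suc n) = tri n + Suc n"

lemma mod_sign_finsum:
  assumes N: "abelian_group N" and I: "finite I" and f: "f \<in> I \<rightarrow> carrier N"
  shows "mod_sign N k (finsum N f I) = finsum N (\<lambda>i. mod_sign N k (f i)) I"
  using I f
proof (induction I rule: finite_induct)
  case empty
  interpret N: abelian_group N by fact
  show ?case by (simp add: mod_sign_def)
next
  case (insert a F)
  interpret N: abelian_group N by fact
  have fa: "f a \<in> carrier N" and fF: "f \<in> F \<rightarrow> carrier N" using insert by auto
  have gF: "(\<lambda>i. mod_sign N k (f i)) \<in> F \<rightarrow> carrier N" using fF mod_sign_closed[OF N] by auto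
  have "mod_sign N k (finsum N f (insert a F)) = mod_sign N k (f a \<oplus>\<^bsub>N\<^esub> finsum N f F)"
    by (simp only: N.finsum_insert[OF insert.hyps fF fa])
  also have "\<dots> = mod_sign N k (f a) \<oplus>\<^bsub>N\<^esub> mod_sign N k (finsum N f F)"
    by (rule mod_sign_add[OF N fa N.finsum_closed[OF fF]])
  also have "\<dots> = mod_sign N k (f a) \<oplus>\<^bsub>N\<^esub> finsum N (\<lambda>i. mod_sign N k (f i)) F"
    by (simp only: insert.IH[OF fF])
  also have "\<dots> = finsum N (\<lambda>i. mod_sign N k (f i)) (insert a F)"
    by (simp only: N.finsum_insert[OF insert.hyps gF mod_sign_closed[OF N fa]])
  finally show ?case .
qed

definition Phi :: "('o, 'm) cat \<Rightarrow> ('o \<Rightarrow> ('k, 'a) module) \<Rightarrow> ('o \<Rightarrow> ('k, 'b) module) \<Rightarrow> nat \<Rightarrow> nat \<Rightarrow>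
    ('o \<times> 'm list \<Rightarrow> 'a list \<Rightarrow> 'b) \<Rightarrow> ('o \<times> 'm list \<Rightarrow> 'a list \<Rightarrow> 'b)" where
  "Phi C A M q n \<Gamma> = (\<lambda>\<tau>. if \<tau> \<in> bw_strings C n then
      hsign (A (fst \<tau>)) (M (bws C (fst \<tau>) (snd \<tau>))) q (tri n) (\<Gamma> (bws C (fst \<tau>) (snd \<tau>), rev (snd \<tau>))) else undefined)"

definition Psi :: "('o, 'm) cat \<Rightarrow> ('o \<Rightarrow> ('k, 'a) module) \<Rightarrow> ('o \<Rightarrow> ('k, 'b) module) \<Rightarrow> nat \<Rightarrow> nat \<Rightarrow>
    ('o \<times> 'm list \<Rightarrow> 'a list \<Rightarrow> 'b) \<Rightarrow> ('o \<times> 'm list \<Rightarrow> 'a list \<Rightarrow> 'b)" where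
  "Psi C A M q n \<Gamma> = (\<lambda>\<sigma>. if \<sigma> \<in> gs_strings C n then
      hsign (A (gs_end C \<sigma>)) (M (fst \<sigma>)) q (tri n) (\<Gamma> (gs_end C \<sigma>, rev (snd \<sigma>))) else undefined)"

locale PS =
  fixes K :: "'k ring" and C :: "('o, 'm) cat"
    and A :: "'o \<Rightarrow> ('k, 'a) module" and Af :: "'m \<Rightarrow> 'a \<Rightarrow> 'a"
    and M :: "'o \<Rightarrow> ('k, 'b) module" and Ml :: "'o \<Rightarrow> 'a \<Rightarrow> 'b \<Rightarrow> 'b"
    and Mr :: "'o \<Rightarrow> 'b \<Rightarrow> 'a \<Rightarrow> 'b" and Mf :: "'m \<Rightarrow> 'b \<Rightarrow> 'b"
    and q :: nat
  assumes cat: "category C"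
    and palg: "presheaf_alg K C A Af"
    and pbim: "presheaf_bimod K C A Af M Ml Mr Mf"
begin

abbreviation "F \<equiv> HH_natsys K C A Af M Mf q"

lemma modA: "c \<in> Ob C \<Longrightarrow> module K (A c)"
  using palg unfolding presheaf_alg_def k_algebra_def by auto

lemma modM: "c \<in> Ob C \<Longrightarrow> module K (M c)"
  using pbim unfolding presheaf_bimod_def bimodule_def by auto

lemma agM: "c \<in> Ob C \<Longrightarrow> abelian_group (M c)"
  using modM module.axioms(2) by blast

lemma Af_lin: "f \<in> Ar C \<Longrightarrow> k_linear K (A (Cod C f)) (A (Dom C f)) (Af f)"
  using palg unfolding presheaf_alg_def k_alg_hom_def by auto

lemma Mf_lin: "f \<in> Ar C \<Longrightarrow> k_linear K (M (Cod C f)) (M (Dom C f)) (Mf f)"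
  using pbim unfolding presheaf_bimod_def by auto

lemma valid_map_Af: "f \<in> Ar C \<Longrightarrow> valid_args (A (Cod C f)) q xs \<Longrightarrow> valid_args (A (Dom C f)) q (map (Af f) xs)"
  using Af_lin[of f] unfolding k_linear_def valid_args_def by auto

lemma bw_carrier:
  "carrier (bw_grp C F n) = (\<Pi>\<^sub>E \<tau>\<in>bw_strings C n. HH K (A (Cod C (cmp_list C (fst \<tau>) (snd \<tau>)))) (M (Dom C (cmp_list C (fst \<tau>) (snd \<tau>)))) q)"
  by (simp add: bw_grp_def HH_natsys_def HH_grp_def)

lemma gs_carrier:
  "carrier (gs_grp K C A M q n) = (\<Pi>\<^sub>E \<sigma>\<in>gs_strings C n. HH K (A (gs_end C \<sigma>)) (M (fst \<sigma>)) q)"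
  by (simp add: gs_grp_def)

lemma Phi_at: "bwp C d fs \<Longrightarrow> length fs = n \<Longrightarrow>
   Phi C A M q n \<Gamma> (d, fs) = hsign (A d) (M (bws C d fs)) q (tri n) (\<Gamma> (bws C d fs, rev fs))"
  by (simp add: Phi_def bw_strings_iff[OF cat])

lemma Gamma_at:
  assumes G: "\<Gamma> \<in> carrier (gs_grp K C A M q n)" and b: "bwp C d fs" and l: "length fs = n"
  shows "\<Gamma> (bws C d fs, rev fs) \<in> HH K (A d) (M (bws C d fs)) q"
proof -
  have m: "(bws C d fs, rev fs) \<in> gs_strings C n" and e: "gs_end C (bws C d fs, rev fs) = d"
    using rb_gsp[OF cat b] l by (auto simp: gs_strings_iff[OF cat])
  have "\<Gamma> (bws C d fs, rev fs) \<in> HH K (A (gs_end C (bws C d fs, rev fs))) (M (fst (bws C d fs, rev fs))) q"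
    using G m unfolding gs_carrier by (rule PiE_mem)
  then show ?thesis unfolding e fst_conv .
qed

lemma Phi_carrier:
  assumes G: "\<Gamma> \<in> carrier (gs_grp K C A M q n)"
  shows "Phi C A M q n \<Gamma> \<in> carrier (bw_grp C F n)"
  unfolding bw_carrier
proof (rule PiE_I)
  fix \<tau> assume t: "\<tau> \<in> bw_strings C n"
  obtain d fs where tau: "\<tau> = (d, fs)" by force
  have b: "bwp C d fs" and l: "length fs = n" using t tau bw_strings_iff[OF cat] by auto
  have cp: "Cod C (cmp_list C d fs) = d" "Dom C (cmp_list C d fs) = bws C d fs"
    using cmp_list_props[OF cat b] by auto
  show "Phi C A M q n \<Gamma> \<tau> \<in> HH K (A (Cod C (cmp_list C (fst \<tau>) (snd \<tau>)))) (M (Dom C (cmp_list C (fst \<tau>) (snd \<tau>)))) q"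
    unfolding tau fst_conv snd_conv cp Phi_at[OF b l]
    by (rule HH_hsign[OF modA[OF bwp_Ob[OF b]] modM[OF bws_Ob[OF cat b]] Gamma_at[OF G b l]])
next
  fix \<tau> assume "\<tau> \<notin> bw_strings C n"
  then show "Phi C A M q n \<Gamma> \<tau> = undefined" by (simp add: Phi_def)
qed

lemma Psi_at: "gsp C c gs \<Longrightarrow> length gs = n \<Longrightarrow>
   Psi C A M q n \<Gamma> (c, gs) = hsign (A (gs_end C (c, gs))) (M c) q (tri n) (\<Gamma> (gs_end C (c, gs), rev gs))"
  by (simp add: Psi_def gs_strings_iff[OF cat])

lemma Gamma'_at:
  assumes G: "\<Gamma> \<in> carrier (bw_grp C F n)" and b: "gsp C c gs" and l: "length gs = n"
  shows "\<Gamma> (gs_end C (c, gs), rev gs) \<in> HH K (A (gs_end C (c, gs))) (M c) q"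
proof -
  have m: "(gs_end C (c, gs), rev gs) \<in> bw_strings C n" and e: "bws C (gs_end C (c, gs)) (rev gs) = c"
    and bb: "bwp C (gs_end C (c, gs)) (rev gs)"
    using rg_bwp[OF cat b] l by (auto simp: bw_strings_iff[OF cat])
  have cp: "Cod C (cmp_list C (gs_end C (c, gs)) (rev gs)) = gs_end C (c, gs)"
     "Dom C (cmp_list C (gs_end C (c, gs)) (rev gs)) = c"
    using cmp_list_props[OF cat bb] e by auto
  have "\<Gamma> (gs_end C (c, gs), rev gs) \<in> HH K (A (Cod C (cmp_list C (fst (gs_end C (c, gs), rev gs)) (snd (gs_end C (c, gs), rev gs)))))
      (M (Dom C (cmp_list C (fst (gs_end C (c, gs), rev gs)) (snd (gs_end C (c, gs), rev gs))))) q"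
    using G m unfolding bw_carrier by (rule PiE_mem)
  then show ?thesis unfolding fst_conv snd_conv cp .
qed

lemma Psi_carrier:
  assumes G: "\<Gamma> \<in> carrier (bw_grp C F n)"
  shows "Psi C A M q n \<Gamma> \<in> carrier (gs_grp K C A M q n)"
  unfolding gs_carrier
proof (rule PiE_I)
  fix \<sigma> assume t: "\<sigma> \<in> gs_strings C n"
  obtain c gs where sig: "\<sigma> = (c, gs)" by force
  have b: "gsp C c gs" and l: "length gs = n" using t sig gs_strings_iff[OF cat] by auto
  show "Psi C A M q n \<Gamma> \<sigma> \<in> HH K (A (gs_end C \<sigma>)) (M (fst \<sigma>)) q"
    unfolding sig fst_conv Psi_at[OF b l]
    by (rule HH_hsign[OF modA[OF gsp_end_Ob[OF cat b]] modM[OF gsp_Ob[OF b]] Gamma'_at[OF G b l]])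
next
  fix \<sigma> assume "\<sigma> \<notin> gs_strings C n"
  then show "Psi C A M q n \<Gamma> \<sigma> = undefined" by (simp add: Psi_def)
qed

lemma Psi_Phi:
  assumes G: "\<Gamma> \<in> carrier (gs_grp K C A M q n)"
  shows "Psi C A M q n (Phi C A M q n \<Gamma>) = \<Gamma>"
proof (rule ext)
  fix \<sigma>
  show "Psi C A M q n (Phi C A M q n \<Gamma>) \<sigma> = \<Gamma> \<sigma>"
  proof (cases "\<sigma> \<in> gs_strings C n")
    case False
    have "\<Gamma> \<sigma> = undefined" using G False unfolding gs_carrier by (rule PiE_arb)
    then show ?thesis using False by (simp add: Psi_def)
  next
    case True
    obtain c gs where sig: "\<sigma> = (c, gs)" by force
    have b: "gsp C c gs" and l: "length gs = n" using True sig gs_strings_iff[OF cat] by auto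
    have bb: "bwp C (gs_end C (c, gs)) (rev gs)" and e: "bws C (gs_end C (c, gs)) (rev gs) = c"
      using rg_bwp[OF cat b] by auto
    have g: "\<Gamma> (c, gs) \<in> HH K (A (gs_end C (c, gs))) (M (fst (c, gs))) q"
      using G True unfolding gs_carrier sig by (rule PiE_mem)
    then have g: "\<Gamma> (c, gs) \<in> HH K (A (gs_end C (c, gs))) (M c) q" by simp
    have "Psi C A M q n (Phi C A M q n \<Gamma>) \<sigma> =
       hsign (A (gs_end C (c, gs))) (M c) q (tri n) (hsign (A (gs_end C (c, gs))) (M c) q (tri n) (\<Gamma> (c, gs)))"
    proof -
      have p: "Phi C A M q n \<Gamma> (gs_end C (c, gs), rev gs) = hsign (A (gs_end C (c, gs))) (M c) q (tri n) (\<Gamma> (c, gs))"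
        using Phi_at[OF bb, of n \<Gamma>] l unfolding e by simp
      show ?thesis unfolding sig Psi_at[OF b l] p ..
    qed
    also have "\<dots> = \<Gamma> \<sigma>"
      unfolding sig hsign_hsign[OF agM[OF gsp_Ob[OF b]] g] by (rule hsign_even[OF g]) presburger
    finally show ?thesis .
  qed
qed

lemma Phi_Psi:
  assumes G: "\<Gamma> \<in> carrier (bw_grp C F n)"
  shows "Phi C A M q n (Psi C A M q n \<Gamma>) = \<Gamma>"
proof (rule ext)
  fix \<tau>
  show "Phi C A M q n (Psi C A M q n \<Gamma>) \<tau> = \<Gamma> \<tau>"
  proof (cases "\<tau> \<in> bw_strings C n")
    case False
    have "\<Gamma> \<tau> = undefined" using G False unfolding bw_carrier by (rule PiE_arb)
    then show ?thesis using False by (simp add: Phi_def)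
  next
    case True
    obtain d fs where tau: "\<tau> = (d, fs)" by force
    have b: "bwp C d fs" and l: "length fs = n" using True tau bw_strings_iff[OF cat] by auto
    have bb: "gsp C (bws C d fs) (rev fs)" and e: "gs_end C (bws C d fs, rev fs) = d"
      using rb_gsp[OF cat b] by auto
    have cp: "Cod C (cmp_list C d fs) = d" "Dom C (cmp_list C d fs) = bws C d fs"
      using cmp_list_props[OF cat b] by auto
    have g: "\<Gamma> (d, fs) \<in> HH K (A (Cod C (cmp_list C (fst (d, fs)) (snd (d, fs))))) (M (Dom C (cmp_list C (fst (d, fs)) (snd (d, fs))))) q"
      using G True unfolding bw_carrier tau by (rule PiE_mem)
    then have g: "\<Gamma> (d, fs) \<in> HH K (A d) (M (bws C d fs)) q" unfolding fst_conv snd_conv cp .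
    have "Phi C A M q n (Psi C A M q n \<Gamma>) \<tau> =
       hsign (A d) (M (bws C d fs)) q (tri n) (hsign (A d) (M (bws C d fs)) q (tri n) (\<Gamma> (d, fs)))"
    proof -
      have p: "Psi C A M q n \<Gamma> (bws C d fs, rev fs) = hsign (A d) (M (bws C d fs)) q (tri n) (\<Gamma> (d, fs))"
        using Psi_at[OF bb, of n \<Gamma>] l unfolding e by simp
      show ?thesis unfolding tau Phi_at[OF b l] p ..
    qed
    also have "\<dots> = \<Gamma> \<tau>"
      unfolding tau hsign_hsign[OF agM[OF bws_Ob[OF cat b]] g] by (rule hsign_even[OF g]) presburger
    finally show ?thesis .
  qed
qed

lemma Phi_hom:
  assumes G1: "\<Gamma>1 \<in> carrier (gs_grp K C A M q n)" and G2: "\<Gamma>2 \<in> carrier (gs_grp K C A M q n)"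
  shows "Phi C A M q n (\<Gamma>1 \<otimes>\<^bsub>gs_grp K C A M q n\<^esub> \<Gamma>2) = Phi C A M q n \<Gamma>1 \<otimes>\<^bsub>bw_grp C F n\<^esub> Phi C A M q n \<Gamma>2"
proof (rule ext)
  fix \<tau>
  show "Phi C A M q n (\<Gamma>1 \<otimes>\<^bsub>gs_grp K C A M q n\<^esub> \<Gamma>2) \<tau> = (Phi C A M q n \<Gamma>1 \<otimes>\<^bsub>bw_grp C F n\<^esub> Phi C A M q n \<Gamma>2) \<tau>"
  proof (cases "\<tau> \<in> bw_strings C n")
    case False
    then show ?thesis by (simp add: Phi_def bw_grp_def)
  next
    case True
    obtain d fs where tau: "\<tau> = (d, fs)" by force
    have b: "bwp C d fs" and l: "length fs = n" using True tau bw_strings_iff[OF cat] by auto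
    have bb: "gsp C (bws C d fs) (rev fs)" and e: "gs_end C (bws C d fs, rev fs) = d"
      using rb_gsp[OF cat b] by auto
    have sg: "(bws C d fs, rev fs) \<in> gs_strings C n" using bb l by (simp add: gs_strings_iff[OF cat])
    have cp: "Cod C (cmp_list C d fs) = d" "Dom C (cmp_list C d fs) = bws C d fs"
      using cmp_list_props[OF cat b] by auto
    have g1: "\<Gamma>1 (bws C d fs, rev fs) \<in> HH K (A d) (M (bws C d fs)) q" using Gamma_at[OF G1 b l] .
    have g2: "\<Gamma>2 (bws C d fs, rev fs) \<in> HH K (A d) (M (bws C d fs)) q" using Gamma_at[OF G2 b l] .
    have N: "abelian_group (M (bws C d fs))" using agM[OF bws_Ob[OF cat b]] .
    have NF: "NF F (cmp_list C d fs) = HH_grp K (A d) (M (bws C d fs)) q"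
      using cp by (simp add: HH_natsys_def)
    have L: "(\<Gamma>1 \<otimes>\<^bsub>gs_grp K C A M q n\<^esub> \<Gamma>2) (bws C d fs, rev fs) =
      (\<lambda>xs. if valid_args (A d) q xs then \<Gamma>1 (bws C d fs, rev fs) xs \<oplus>\<^bsub>M (bws C d fs)\<^esub> \<Gamma>2 (bws C d fs, rev fs) xs else undefined)"
      using sg e by (simp add: gs_grp_def HH_grp_simps)
    have R: "(Phi C A M q n \<Gamma>1 \<otimes>\<^bsub>bw_grp C F n\<^esub> Phi C A M q n \<Gamma>2) (d, fs) =
      monoid.mult (HH_grp K (A d) (M (bws C d fs)) q) (Phi C A M q n \<Gamma>1 (d, fs)) (Phi C A M q n \<Gamma>2 (d, fs))"
      using True tau NF by (simp add: bw_grp_def)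
    show ?thesis
      unfolding tau R Phi_at[OF b l] L HH_grp_simps
    proof (rule ext)
      fix xs
      show "hsign (A d) (M (bws C d fs)) q (tri n)
          (\<lambda>xs. if valid_args (A d) q xs then \<Gamma>1 (bws C d fs, rev fs) xs \<oplus>\<^bsub>M (bws C d fs)\<^esub> \<Gamma>2 (bws C d fs, rev fs) xs else undefined) xs =
        (if valid_args (A d) q xs then hsign (A d) (M (bws C d fs)) q (tri n) (\<Gamma>1 (bws C d fs, rev fs)) xs \<oplus>\<^bsub>M (bws C d fs)\<^esub>
            hsign (A d) (M (bws C d fs)) q (tri n) (\<Gamma>2 (bws C d fs, rev fs)) xs else undefined)"
      proof (cases "valid_args (A d) q xs")
        case True
        show ?thesis unfolding hsign_def if_P[OF True]
          by (rule mod_sign_add[OF N HH_D(1)[OF g1 True] HH_D(1)[OF g2 True]])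
      qed (simp add: hsign_def)
    qed
  qed
qed

end




lemma reindex_img: "(\<lambda>i. Suc n - i) ` {1..n} = {1..(n::nat)}"
proof
  show "(\<lambda>i. Suc n - i) ` {1..n} \<subseteq> {1..n}" by auto
next
  show "{1..n} \<subseteq> (\<lambda>i. Suc n - i) ` {1..n}"
  proof
    fix r assume r: "r \<in> {1..n}"
    then have "r = Suc n - (Suc n - r)" and "Suc n - r \<in> {1..n}" by auto
    then show "r \<in> (\<lambda>i. Suc n - i) ` {1..n}" by (rule image_eqI)
  qed
qed

lemma reindex_inj: "inj_on (\<lambda>i. Suc n - i) {1..(n::nat)}"
  by (auto simp: inj_on_def)

lemma core_identity:
  assumes N: "abelian_group N" and xa: "xa \<in> carrier N" and za: "za \<in> carrier N"
    and y: "\<And>r. r \<in> {1..n} \<Longrightarrow> y r \<in> carrier N"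
  shows "mod_sign N (t + Suc n) (ring.add N (ring.add N xa (finsum N (\<lambda>r. mod_sign N r (y r)) {1..n})) (mod_sign N (Suc n) za))
   = ring.add N (ring.add N (mod_sign N t za) (finsum N (\<lambda>i. mod_sign N i (mod_sign N t (y (Suc n - i)))) {1..n})) (mod_sign N (Suc n) (mod_sign N t xa))"
proof -
  interpret N: abelian_group N by fact
  have yF: "(\<lambda>r. mod_sign N r (y r)) \<in> {1..n} \<rightarrow> carrier N" using y mod_sign_closed[OF N] by auto
  have yF2: "(\<lambda>r. mod_sign N (t + Suc n + r) (y r)) \<in> {1..n} \<rightarrow> carrier N" using y mod_sign_closed[OF N] by auto
  have yF3: "(\<lambda>i. mod_sign N i (mod_sign N t (y (Suc n - i)))) \<in> {1..n} \<rightarrow> carrier N"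
  proof
    fix i assume "i \<in> {1..n}"
    then have "Suc n - i \<in> {1..n}" by auto
    then show "mod_sign N i (mod_sign N t (y (Suc n - i))) \<in> carrier N"
      using y mod_sign_closed[OF N] by blast
  qed
  define S1 where "S1 = finsum N (\<lambda>r. mod_sign N r (y r)) {1..n}"
  define S2 where "S2 = finsum N (\<lambda>i. mod_sign N i (mod_sign N t (y (Suc n - i)))) {1..n}"
  have S1c: "S1 \<in> carrier N" unfolding S1_def using yF by (rule N.finsum_closed)
  have S2c: "S2 \<in> carrier N" unfolding S2_def using yF3 by (rule N.finsum_closed)
  have s: "mod_sign N (t + Suc n) S1 = S2"
  proof -
    have "mod_sign N (t + Suc n) S1 = finsum N (\<lambda>r. mod_sign N (t + Suc n) (mod_sign N r (y r))) {1..n}"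
      unfolding S1_def by (rule mod_sign_finsum[OF N _ yF]) simp
    also have "\<dots> = finsum N (\<lambda>r. mod_sign N (t + Suc n + r) (y r)) {1..n}"
      by (rule N.finsum_cong'[OF refl yF2]) (simp add: mod_sign_mod_sign[OF N y])
    also have "\<dots> = finsum N (\<lambda>r. mod_sign N (t + Suc n + r) (y r)) ((\<lambda>i. Suc n - i) ` {1..n})"
      by (simp only: reindex_img)
    also have "\<dots> = finsum N (\<lambda>i. mod_sign N (t + Suc n + (Suc n - i)) (y (Suc n - i))) {1..n}"
      by (rule N.finsum_reindex[OF _ reindex_inj]) (simp only: reindex_img yF2)
    also have "\<dots> = S2" unfolding S2_def
    proof (rule N.finsum_cong'[OF refl yF3])
      fix i assume i: "i \<in> {1..n}"
      then have "Suc n - i \<in> {1..n}" by auto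
      then have yi: "y (Suc n - i) \<in> carrier N" using y by blast
      have "even (t + Suc n + (Suc n - i)) = even (i + t)" using i by auto
      then show "mod_sign N (t + Suc n + (Suc n - i)) (y (Suc n - i)) = mod_sign N i (mod_sign N t (y (Suc n - i)))"
        unfolding mod_sign_mod_sign[OF N yi] by (rule mod_sign_parity)
    qed
    finally show ?thesis .
  qed
  have mx: "mod_sign N (t + Suc n) xa = mod_sign N (Suc n) (mod_sign N t xa)"
    unfolding mod_sign_mod_sign[OF N xa] by (rule mod_sign_parity) auto
  have mz: "mod_sign N (t + Suc n) (mod_sign N (Suc n) za) = mod_sign N t za"
    unfolding mod_sign_mod_sign[OF N za] by (rule mod_sign_parity) auto
  have c1: "mod_sign N (Suc n) (mod_sign N t xa) \<in> carrier N" "mod_sign N t za \<in> carrier N"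
    "mod_sign N (Suc n) za \<in> carrier N"
    using xa za mod_sign_closed[OF N] by auto
  have "mod_sign N (t + Suc n) ((xa \<oplus>\<^bsub>N\<^esub> S1) \<oplus>\<^bsub>N\<^esub> mod_sign N (Suc n) za)
      = (mod_sign N (t + Suc n) xa \<oplus>\<^bsub>N\<^esub> mod_sign N (t + Suc n) S1) \<oplus>\<^bsub>N\<^esub> mod_sign N (t + Suc n) (mod_sign N (Suc n) za)"
    using xa S1c c1 mod_sign_add[OF N] by (simp only: N.a_closed)
  also have "\<dots> = (mod_sign N (Suc n) (mod_sign N t xa) \<oplus>\<^bsub>N\<^esub> S2) \<oplus>\<^bsub>N\<^esub> mod_sign N t za"
    unfolding mx mz s ..
  also have "\<dots> = (mod_sign N t za \<oplus>\<^bsub>N\<^esub> S2) \<oplus>\<^bsub>N\<^esub> mod_sign N (Suc n) (mod_sign N t xa)"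
    using c1 S2c by (metis N.a_assoc N.a_comm N.a_closed)
  finally show ?thesis
    unfolding S1_def[symmetric] S2_def[symmetric] .
qed

context PS
begin

lemma Phi_diff:
  assumes G: "\<Gamma> \<in> carrier (gs_grp K C A M q n)"
  shows "Phi C A M q (Suc n) (gs_diff K C A Af M Mf q n \<Gamma>) = bw_diff C F n (Phi C A M q n \<Gamma>)"
proof (rule ext)
  fix \<tau>
  show "Phi C A M q (Suc n) (gs_diff K C A Af M Mf q n \<Gamma>) \<tau> = bw_diff C F n (Phi C A M q n \<Gamma>) \<tau>"
  proof (cases "\<tau> \<in> bw_strings C (Suc n)")
    case False
    then show ?thesis by (simp add: Phi_def bw_diff_def)
  next
    case True
    obtain d fs where tau: "\<tau> = (d, fs)" by force
    have tin: "(d, fs) \<in> bw_strings C (Suc n)" using True tau by simp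
    have b: "bwp C d fs" and l: "length fs = Suc n" using tin bw_strings_iff[OF cat] by auto
    obtain f fs1 where fsc: "fs = f # fs1" using l by (cases fs) auto
    obtain fs2 lst where fss: "fs = fs2 @ [lst]" using l by (cases fs rule: rev_cases) auto
    define c where "c = bws C d fs"
    have f_props: "f \<in> Ar C" "Cod C f = d" "bwp C (Dom C f) fs1" "bws C (Dom C f) fs1 = c" "length fs1 = n"
      using b l unfolding fsc c_def by auto
    have l_props: "lst \<in> Ar C" "Cod C lst = bws C d fs2" "bwp C d fs2" "Dom C lst = c" "length fs2 = n"
      using b l unfolding fss c_def by (auto simp: bwp_snoc bws_snoc)
    have hd_fs: "hd fs = f" "tl fs = fs1" using fsc by auto
    have last_fs: "last fs = lst" "butlast fs = fs2" using fss by auto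
    have rgs: "hd (rev fs) = lst" "tl (rev fs) = rev fs2" "butlast (rev fs) = rev fs1" "last (rev fs) = f"
      using hd_fs last_fs by (simp_all add: hd_rev last_rev) (simp add: fss)
    have dOb: "d \<in> Ob C" using bwp_Ob[OF b] .
    have cOb: "c \<in> Ob C" unfolding c_def using bws_Ob[OF cat b] .
    have lOb: "Cod C lst \<in> Ob C" using cat_CodOb[OF cat l_props(1)] .
    have fOb: "Dom C f \<in> Ob C" using cat_DomOb[OF cat f_props(1)] .
    have sig: "(c, rev fs) \<in> gs_strings C (Suc n)" "gs_end C (c, rev fs) = d"
      using rb_gsp[OF cat b] l unfolding c_def by (auto simp: gs_strings_iff[OF cat])
    have cp: "Cod C (cmp_list C d fs) = d" "Dom C (cmp_list C d fs) = c"
      using cmp_list_props[OF cat b] unfolding c_def by auto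
    have cp2: "Cod C (cmp_list C d fs2) = d" using cmp_list_props[OF cat l_props(3)] by auto
    define H where "H = HH_grp K (A d) (M c) q"
    have NF: "NF F (cmp_list C d fs) = H" by (simp add: HH_natsys_def cp H_def)
    have mAd: "module K (A d)" using modA[OF dOb] .
    have mMc: "module K (M c)" using modM[OF cOb] .
    have agN: "abelian_group (M c)" using agM[OF cOb] .
    have mMl: "module K (M (Cod C lst))" using modM[OF lOb] .
    define Z0 where "Z0 = \<Gamma> (c, rev fs1)"
    have Z0: "Z0 \<in> HH K (A (Dom C f)) (M c) q"
      using Gamma_at[OF G f_props(3) f_props(5)] unfolding f_props(4) Z0_def .
    define X0 where "X0 = \<Gamma> (Cod C lst, rev fs2)"
    have X0: "X0 \<in> HH K (A d) (M (Cod C lst)) q"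
      using Gamma_at[OF G l_props(3) l_props(5)] unfolding l_props(2)[symmetric] X0_def .
    define Y where "Y r = \<Gamma> (c, gs_merge C r (rev fs))" for r
    have mergeY: "bwp C d (bw_merge C i fs) \<and> length (bw_merge C i fs) = n \<and> bws C d (bw_merge C i fs) = c
        \<and> rev (bw_merge C i fs) = gs_merge C (Suc n - i) (rev fs)" if i: "i \<in> {1..n}" for i
      using bw_merge_props[OF cat b, of i] rev_bw_merge[OF l, of i C] i l unfolding c_def by auto
    have PhiY: "Phi C A M q n \<Gamma> (d, bw_merge C i fs) = hsign (A d) (M c) q (tri n) (Y (Suc n - i))"
      and YH: "Y (Suc n - i) \<in> HH K (A d) (M c) q" if i: "i \<in> {1..n}" for i
    proof -
      have m: "bwp C d (bw_merge C i fs)" "length (bw_merge C i fs) = n" "bws C d (bw_merge C i fs) = c"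
        "rev (bw_merge C i fs) = gs_merge C (Suc n - i) (rev fs)" using mergeY[OF i] by auto
      show "Phi C A M q n \<Gamma> (d, bw_merge C i fs) = hsign (A d) (M c) q (tri n) (Y (Suc n - i))"
        unfolding Phi_at[OF m(1) m(2)] m(3) m(4) Y_def ..
      show "Y (Suc n - i) \<in> HH K (A d) (M c) q"
        using Gamma_at[OF G m(1) m(2)] unfolding m(3) m(4) Y_def .
    qed
    have Yc: "Y r xs \<in> carrier (M c)" if r: "r \<in> {1..n}" and v: "valid_args (A d) q xs" for r xs
    proof -
      have "Suc n - r \<in> {1..n}" and "Suc n - (Suc n - r) = r" using r by auto
      then show ?thesis using YH[of "Suc n - r"] HH_D(1) v by metis
    qed
    have PhiZ: "Phi C A M q n \<Gamma> (Dom C f, fs1) = hsign (A (Dom C f)) (M c) q (tri n) Z0"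
      unfolding Phi_at[OF f_props(3) f_props(5)] f_props(4) Z0_def ..
    have PhiX: "Phi C A M q n \<Gamma> (d, fs2) = hsign (A d) (M (Cod C lst)) q (tri n) X0"
      unfolding Phi_at[OF l_props(3) l_props(5)] l_props(2)[symmetric] X0_def ..
    define Lw where "Lw = lower F f (cmp_list C (Dom C f) fs1) (Phi C A M q n \<Gamma> (Dom C f, fs1))"
    define U where "U = upper F lst (cmp_list C d fs2) (Phi C A M q n \<Gamma> (d, fs2))"
    define FPf where "FPf = (\<lambda>i. grp_sign H i (Phi C A M q n \<Gamma> (d, bw_merge C i fs)))"
    have RHS: "bw_diff C F n (Phi C A M q n \<Gamma>) \<tau> =
        monoid.mult H (monoid.mult H Lw (finprod H FPf {1..n})) (grp_sign H (Suc n) U)"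
      unfolding bw_diff_def tau using tin NF hd_fs last_fs by (simp add: Let_def Lw_def U_def FPf_def)
    have Lw_eq: "Lw = (\<lambda>xs. if valid_args (A d) q xs then mod_sign (M c) (tri n) (Z0 (map (Af f) xs)) else undefined)"
      unfolding Lw_def PhiZ using valid_map_Af[OF f_props(1)] f_props(2)
      by (intro ext) (simp add: HH_natsys_def hsign_def)
    have U_eq: "U = (\<lambda>xs. if valid_args (A d) q xs then Mf lst (hsign (A d) (M (Cod C lst)) q (tri n) X0 xs) else undefined)"
      unfolding U_def PhiX by (simp add: HH_natsys_def cp2)
    have U_HH: "U \<in> HH K (A d) (M c) q"
      unfolding U_eq using HH_upper[OF mAd mMl mMc _ HH_hsign[OF mAd mMl X0]] Mf_lin[OF l_props(1)] l_props(4) by simp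
    have FPf_eq: "FPf i = hsign (A d) (M c) q i (hsign (A d) (M c) q (tri n) (Y (Suc n - i)))"
      and FPf_HH: "FPf i \<in> HH K (A d) (M c) q" if i: "i \<in> {1..n}" for i
    proof -
      have h: "hsign (A d) (M c) q (tri n) (Y (Suc n - i)) \<in> HH K (A d) (M c) q"
        using HH_hsign[OF mAd mMc YH[OF i]] .
      show "FPf i = hsign (A d) (M c) q i (hsign (A d) (M c) q (tri n) (Y (Suc n - i)))"
        unfolding FPf_def PhiY[OF i] H_def using HH_grp_sign[OF mAd mMc h] .
      then show "FPf i \<in> HH K (A d) (M c) q" using HH_hsign[OF mAd mMc h] by simp
    qed
    have FP_eq: "finprod H FPf {1..n} = (\<lambda>xs. if valid_args (A d) q xs then finsum (M c) (\<lambda>i. FPf i xs) {1..n} else undefined)"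
      unfolding H_def by (rule HH_finprod[OF mAd mMc]) (use FPf_HH in auto)
    have sU: "grp_sign H (Suc n) U = hsign (A d) (M c) q (Suc n) U"
      unfolding H_def by (rule HH_grp_sign[OF mAd mMc U_HH])
    have LHS: "Phi C A M q (Suc n) (gs_diff K C A Af M Mf q n \<Gamma>) \<tau> = hsign (A d) (M c) q (tri (Suc n))
       (\<lambda>xs. if valid_args (A d) q xs then
          ring.add (M c) (ring.add (M c) (Mf lst (X0 xs)) (finsum (M c) (\<lambda>r. mod_sign (M c) r (Y r xs)) {1..n}))
            (mod_sign (M c) (Suc n) (Z0 (map (Af f) xs)))
        else undefined)"
      unfolding tau Phi_at[OF b l] c_def[symmetric]
      using sig apply (simp only: gs_diff_def Let_def if_P fst_conv snd_conv)
      apply (simp only: rgs)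
      apply (simp only: X0_def Y_def Z0_def)
      done
    show ?thesis
    proof (rule ext)
      fix xs
      show "Phi C A M q (Suc n) (gs_diff K C A Af M Mf q n \<Gamma>) \<tau> xs = bw_diff C F n (Phi C A M q n \<Gamma>) \<tau> xs"
      proof (cases "valid_args (A d) q xs")
        case False
        then show ?thesis unfolding LHS RHS by (simp add: hsign_def H_def HH_grp_simps)
      next
        case v: True
        have vm: "valid_args (A (Dom C f)) q (map (Af f) xs)" using valid_map_Af[OF f_props(1)] v f_props(2) by simp
        have xc: "X0 xs \<in> carrier (M (Cod C lst))" using HH_D(1)[OF X0 v] .
        have Mfx: "Mf lst (X0 xs) \<in> carrier (M c)"
          using Mf_lin[OF l_props(1)] xc l_props(4) unfolding k_linear_def by auto
        have zc: "Z0 (map (Af f) xs) \<in> carrier (M c)" using HH_D(1)[OF Z0 vm] .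
        have Mfs: "Mf lst (mod_sign (M (Cod C lst)) (tri n) (X0 xs)) = mod_sign (M c) (tri n) (Mf lst (X0 xs))"
          using linear_mod_sign[OF mMl _ Mf_lin[OF l_props(1)] xc] l_props(4) mMc by simp
        have sumeq: "finsum (M c) (\<lambda>i. FPf i xs) {1..n} = finsum (M c) (\<lambda>i. mod_sign (M c) i (mod_sign (M c) (tri n) (Y (Suc n - i) xs))) {1..n}"
        proof (rule abelian_monoid.finsum_cong'[OF abelian_group.axioms(1)[OF agN] refl])
          show "(\<lambda>i. mod_sign (M c) i (mod_sign (M c) (tri n) (Y (Suc n - i) xs))) \<in> {1..n} \<rightarrow> carrier (M c)"
          proof
            fix i assume i: "i \<in> {1..n}"
            then have "Suc n - i \<in> {1..n}" by auto
            then show "mod_sign (M c) i (mod_sign (M c) (tri n) (Y (Suc n - i) xs)) \<in> carrier (M c)"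
              using Yc[OF _ v] mod_sign_closed[OF agN] by blast
          qed
        next
          fix i assume i: "i \<in> {1..n}"
          show "FPf i xs = mod_sign (M c) i (mod_sign (M c) (tri n) (Y (Suc n - i) xs))"
            unfolding FPf_eq[OF i] using v by (simp add: hsign_def)
        qed
        have "Phi C A M q (Suc n) (gs_diff K C A Af M Mf q n \<Gamma>) \<tau> xs =
            mod_sign (M c) (tri n + Suc n) (ring.add (M c) (ring.add (M c) (Mf lst (X0 xs)) (finsum (M c) (\<lambda>r. mod_sign (M c) r (Y r xs)) {1..n}))
            (mod_sign (M c) (Suc n) (Z0 (map (Af f) xs))))"
          unfolding LHS using v by (simp add: hsign_def)
        also have "\<dots> = ring.add (M c) (ring.add (M c) (mod_sign (M c) (tri n) (Z0 (map (Af f) xs)))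
              (finsum (M c) (\<lambda>i. mod_sign (M c) i (mod_sign (M c) (tri n) (Y (Suc n - i) xs))) {1..n}))
              (mod_sign (M c) (Suc n) (mod_sign (M c) (tri n) (Mf lst (X0 xs))))"
          by (rule core_identity[OF agN Mfx zc Yc[OF _ v]])
        also have "\<dots> = bw_diff C F n (Phi C A M q n \<Gamma>) \<tau> xs"
          unfolding RHS sU FP_eq unfolding Lw_eq U_eq H_def HH_grp_simps
          using v sumeq Mfs by (simp add: hsign_def)
        finally show ?thesis .
      qed
    qed
  qed
qed

end



theorem proposition3p8:
  fixes K :: "'k ring"
    and C :: "('o, 'm) cat"
    and A :: "'o \<Rightarrow> ('k, 'a) module" and Af :: "'m \<Rightarrow> 'a \<Rightarrow> 'a"
    and M :: "'o \<Rightarrow> ('k, 'b) module" and Ml :: "'o \<Rightarrow> 'a \<Rightarrow> 'b \<Rightarrow> 'b"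
    and Mr :: "'o \<Rightarrow> 'b \<Rightarrow> 'a \<Rightarrow> 'b" and Mf :: "'m \<Rightarrow> 'b \<Rightarrow> 'b"
  assumes "field K"
    and "finite_category C"
    and "presheaf_alg K C A Af"
    and "presheaf_bimod K C A Af M Ml Mr Mf"
  shows "\<forall>q::nat. complexes_isomorphic
           (gs_grp K C A M q) (gs_diff K C A Af M Mf q)
           (bw_grp C (HH_natsys K C A Af M Mf q)) (bw_diff C (HH_natsys K C A Af M Mf q))"
proof
  fix q :: nat
  interpret P: PS K C A Af M Ml Mr Mf q
    using assms by unfold_locales (auto simp: finite_category_def)
  show "complexes_isomorphic
           (gs_grp K C A M q) (gs_diff K C A Af M Mf q)
           (bw_grp C (HH_natsys K C A Af M Mf q)) (bw_diff C (HH_natsys K C A Af M Mf q))"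
    unfolding complexes_isomorphic_def cochain_iso_def
  proof (intro exI allI conjI ballI)
    fix n
    have hom: "Phi C A M q n \<in> hom (gs_grp K C A M q n) (bw_grp C (HH_natsys K C A Af M Mf q) n)"
      unfolding hom_def using P.Phi_carrier P.Phi_hom by auto
    have bij: "bij_betw (Phi C A M q n) (carrier (gs_grp K C A M q n)) (carrier (bw_grp C (HH_natsys K C A Af M Mf q) n))"
    proof (rule bij_betw_byWitness[where f'="Psi C A M q n"])
      show "\<forall>a\<in>carrier (gs_grp K C A M q n). Psi C A M q n (Phi C A M q n a) = a" using P.Psi_Phi by auto
      show "\<forall>a'\<in>carrier (bw_grp C (HH_natsys K C A Af M Mf q) n). Phi C A M q n (Psi C A M q n a') = a'" using P.Phi_Psi by auto
      show "Phi C A M q n ` carrier (gs_grp K C A M q n) \<subseteq> carrier (bw_grp C (HH_natsys K C A Af M Mf q) n)"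
        using P.Phi_carrier by auto
      show "Psi C A M q n ` carrier (bw_grp C (HH_natsys K C A Af M Mf q) n) \<subseteq> carrier (gs_grp K C A M q n)"
        using P.Psi_carrier by auto
    qed
    show "Phi C A M q n \<in> iso (gs_grp K C A M q n) (bw_grp C (HH_natsys K C A Af M Mf q) n)"
      unfolding iso_def using hom bij by simp
  next
    fix n x
    assume "x \<in> carrier (gs_grp K C A M q n)"
    then show "Phi C A M q (Suc n) (gs_diff K C A Af M Mf q n x) = bw_diff C (HH_natsys K C A Af M Mf q) n (Phi C A M q n x)"
      by (rule P.Phi_diff)
  qed
qed

end
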